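(* Consider the problem $\min_{w\in\mathbb{R}^d}\big[\frac1n\sum_{i=1}^n\phi_i(x_i^\top w)+\sigma\|w\|_1\big]$ with optimal solution $w^*$, and let $B\ge\|w^*\|_2$ and $R\ge\max_i\|x_i\|_2$. The number of iterations required by the Prox-SDCA procedure described in the context (run with $g(w)=\frac12\|w\|_2^2+\frac{\sigma}{\lambda}\|w\|_1$ and $\lambda=\epsilon/B^2$) to solve this problem to accuracy $\epsilon$ is $\tilde{O}\big(n + \frac{R^2 B^2}{\epsilon\gamma}\big)$ if every $\phi_i$ is $(1/\gamma)$-smooth, and $\tilde{O}\big(n + \frac{L^2 R^2 B^2}{\epsilon^2}\big)$ if every $\phi_i$ is $L$-Lipschitz.
   Context: Here $x_1,\dots,x_n\in\mathbb{R}^d$, $\sigma>0$, and $\phi_i:\mathbb{R}\to\mathbb{R}$ are convex with $\phi_i\ge0$ and $\frac1n\sum_i\phi_i(0)\le1$. $\phi_i$ is $L$-Lipschitz if $|\phi_i(a)-\phi_i(b)|\le L|a-b|$, and $(1/\gamma)$-smooth if differentiable with $(1/\gamma)$-Lipschitz derivative. $\tilde O(\cdot)$ hides logarithmic factors. A point $\hat w$ solves the problem to accuracy $\epsilon$ if its objective value is within $\epsilon$ of the optimum. Prox-SDCA here: with $X_i=x_i$ ($k=1$), $g(w)=\frac12\|w\|_2^2+\frac\sigma\lambda\|w\|_1$, $P(w)=\frac1n\sum_i\phi_i(x_i^\top w)+\lambda g(w)$, $D(\alpha)=\frac1n\sum_i-\phi_i^*(-\alpha_i)-\lambda g^*(\frac{1}{\lambda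 n}\sum_ix_i\alpha_i)$ for $\alpha\in\mathbb{R}^n$ (where $f^*$ denotes the convex conjugate), norms $\|\cdot\|_D=|\cdot|$ on $\mathbb{R}$ and $\|\cdot\|_{D'}=\|\cdot\|_2$ on $\mathbb{R}^d$, and $\nabla_j g^*(v)=\mathrm{sign}(v_j)\,[|v_j|-\sigma/\lambda]_+$. Set $\alpha^{(0)}=0$, $v^{(0)}=0$, $w^{(0)}=\nabla g^*(0)$; for $t=1,\dots,T$ pick $i$ uniformly at random, choose $\Delta\alpha_i\in\mathbb{R}$ by, e.g., Option I: $\Delta\alpha_i\in\arg\max_\Delta[-\phi_i^*(-(\alpha_i^{(t-1)}+\Delta))-w^{(t-1)\top}x_i\Delta-\frac{1}{2\lambda n}\|x_i\Delta\|_2^2]$, or Option II/III/IV/V: take $u$ with $-u\in\partial\phi_i(x_i^\top w^{(t-1)})$, $z=u-\alpha_i^{(t-1)}$, $\Delta\alpha_i=sz$ with $s\in[0,1]$ maximizing $-\phi_i^*(-(\alpha_i^{(t-1)}+sz))-s\,w^{(t-1)\top}x_iz-\frac{s^2}{2\lambda n}\|x_iz\|_2^2$ (II), or $s=\frac{\phi_i(x_i^\top w^{(t-1)})+\phi_i^*(-\alpha_i^{(t-1)})+w^{(t-1)\top}x_i\alpha_i^{(t-1)}+\frac\gamma2 z^2}{z^2(\gamma+\|x_i\|_2^2/(\lambda n))}$ (III), or the same with $\|x_i\|_2^2$ replaced by $R^2$ (IV), or, for smooth losses, $\Delta\alpha_i=\frac{\lambda n\gamma}{R^2+\lambda n\gamma}(-\phi_i'(x_i^\top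 w^{(t-1)})-\alpha_i^{(t-1)})$ (V); then update $\alpha_i^{(t)}=\alpha_i^{(t-1)}+\Delta\alpha_i$, $v^{(t)}=v^{(t-1)}+(\lambda n)^{-1}x_i\Delta\alpha_i$, $w^{(t)}=\nabla g^*(v^{(t)})$. Output is $w^{(T)}$, an average of iterates $w^{(t-1)}$ over $t\in\{T_0+1,\dots,T\}$, or a random such iterate. *)

theory Defs
  imports "HOL-Analysis.Analysis"
begin

text \<open>Vectors in R^d are represented as functions nat => real; only the
coordinates 0..d-1 matter (all quantities below only look at those).\<close>

definition dotp :: "nat \<Rightarrow> (nat \<Rightarrow> real) \<Rightarrow> (nat \<Rightarrow> real) \<Rightarrow> real" where
  "dotp d a b = (\<Sum>j<d. a j * b j)"

definition norm2 :: "nat \<Rightarrow> (nat \<Rightarrow> real) \<Rightarrow> real" where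
  "norm2 d a = sqrt (\<Sum>j<d. (a j)^2)"

definition norm1 :: "nat \<Rightarrow> (nat \<Rightarrow> real) \<Rightarrow> real" where
  "norm1 d a = (\<Sum>j<d. \<bar>a j\<bar>)"

definition primal0 :: "nat \<Rightarrow> nat \<Rightarrow> (nat \<Rightarrow> real \<Rightarrow> real) \<Rightarrow> (nat \<Rightarrow> nat \<Rightarrow> real)
    \<Rightarrow> real \<Rightarrow> (nat \<Rightarrow> real) \<Rightarrow> real" where
  "primal0 n d \<phi> x \<sigma> w = (\<Sum>i<n. \<phi> i (dotp d (x i) w)) / real n + \<sigma> * norm1 d w"

definition fconj :: "(real \<Rightarrow> real) \<Rightarrow> real \<Rightarrow> ereal" where
  "fconj f u = (SUP a. ereal (u * a - f a))"

definition lipschitz_loss :: "real \<Rightarrow> (real \<Rightarrow> real) \<Rightarrow> bool" where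
  "lipschitz_loss L f \<longleftrightarrow> (\<forall>a b. \<bar>f a - f b\<bar> \<le> L * \<bar>a - b\<bar>)"

definition smooth_loss :: "real \<Rightarrow> (real \<Rightarrow> real) \<Rightarrow> bool" where
  "smooth_loss \<gamma> f \<longleftrightarrow> (\<forall>a. f differentiable (at a)) \<and>
     (\<forall>a b. \<bar>deriv f a - deriv f b\<bar> \<le> (1 / \<gamma>) * \<bar>a - b\<bar>)"

definition is_subgrad :: "(real \<Rightarrow> real) \<Rightarrow> real \<Rightarrow> real \<Rightarrow> bool" where
  "is_subgrad f a g \<longleftrightarrow> (\<forall>b. f a + g * (b - a) \<le> f b)"

text \<open>v = (lambda n)^{-1} sum_i x_i alpha_i and w = grad g^*(v) (soft thresholding).\<close>
definition vdual :: "nat \<Rightarrow> real \<Rightarrow> (nat \<Rightarrow> nat \<Rightarrow> real) \<Rightarrow> (nat \<Rightarrow> real) \<Rightarrow> nat \<Rightarrow> real" where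
  "vdual n lam x \<alpha> = (\<lambda>j. (\<Sum>i<n. \<alpha> i * x i j) / (lam * real n))"

definition gradgconj :: "real \<Rightarrow> real \<Rightarrow> (nat \<Rightarrow> real) \<Rightarrow> nat \<Rightarrow> real" where
  "gradgconj lam \<sigma> v = (\<lambda>j. sgn (v j) * max 0 (\<bar>v j\<bar> - \<sigma> / lam))"

definition wof :: "nat \<Rightarrow> real \<Rightarrow> real \<Rightarrow> (nat \<Rightarrow> nat \<Rightarrow> real) \<Rightarrow> (nat \<Rightarrow> real) \<Rightarrow> nat \<Rightarrow> real" where
  "wof n lam \<sigma> x \<alpha> = gradgconj lam \<sigma> (vdual n lam x \<alpha>)"

text \<open>Dual objective along coordinate i (Option I / II objective).\<close>
definition coord_obj :: "(nat \<Rightarrow> real \<Rightarrow> real) \<Rightarrow> nat \<Rightarrow> nat \<Rightarrow> real \<Rightarrow> (nat \<Rightarrow> nat \<Rightarrow> real)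
    \<Rightarrow> (nat \<Rightarrow> real) \<Rightarrow> nat \<Rightarrow> (nat \<Rightarrow> real) \<Rightarrow> real \<Rightarrow> ereal" where
  "coord_obj \<phi> d n lam x w i \<alpha> \<Delta> =
     - fconj (\<phi> i) (- (\<alpha> i + \<Delta>))
     - ereal (dotp d w (x i) * \<Delta> + (norm2 d (x i))^2 * \<Delta>^2 / (2 * lam * real n))"

text \<open>Option III/IV step size (with the cap min 1 of the original paper);
  c = ||x_i||^2 for Option III and c = R^2 for Option IV.\<close>
definition s_opt :: "(nat \<Rightarrow> real \<Rightarrow> real) \<Rightarrow> nat \<Rightarrow> real \<Rightarrow> real \<Rightarrow> real \<Rightarrow> real
    \<Rightarrow> (nat \<Rightarrow> real) \<Rightarrow> nat \<Rightarrow> real \<Rightarrow> real" where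
  "s_opt \<phi> n lam \<gamma> c a \<alpha> i z =
     min 1 ((\<phi> i a + real_of_ereal (fconj (\<phi> i) (- \<alpha> i)) + a * \<alpha> i + \<gamma> / 2 * z^2)
            / (z^2 * (\<gamma> + c / (lam * real n))))"

text \<open>Admissible coordinate increments Delta alpha_i (Options I--IV, and V if allowV).\<close>
definition step_ok :: "(nat \<Rightarrow> real \<Rightarrow> real) \<Rightarrow> nat \<Rightarrow> nat \<Rightarrow> real \<Rightarrow> real
    \<Rightarrow> (nat \<Rightarrow> nat \<Rightarrow> real) \<Rightarrow> real \<Rightarrow> real \<Rightarrow> bool \<Rightarrow> (nat \<Rightarrow> real) \<Rightarrow> nat \<Rightarrow> real \<Rightarrow> bool" where
  "step_ok \<phi> d n lam \<sigma> x R \<gamma> allowV \<alpha> i \<Delta> \<longleftrightarrow>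
     (let w = wof n lam \<sigma> x \<alpha>; a = dotp d (x i) w; F = coord_obj \<phi> d n lam x w i \<alpha> in
       (\<forall>\<Delta>'. F \<Delta>' \<le> F \<Delta>)
     \<or> (\<exists>u. is_subgrad (\<phi> i) a (- u) \<and>
          (let z = u - \<alpha> i in
             (\<exists>s\<in>{0..1}. \<Delta> = s * z \<and> (\<forall>s'\<in>{0..1}. F (s' * z) \<le> F (s * z)))
           \<or> \<Delta> = s_opt \<phi> n lam \<gamma> ((norm2 d (x i))^2) a \<alpha> i z * z
           \<or> \<Delta> = s_opt \<phi> n lam \<gamma> (R^2) a \<alpha> i z * z))
     \<or> (allowV \<and> \<Delta> = lam * real n * \<gamma> / (R^2 + lam * real n * \<gamma>) * (- deriv (\<phi> i) a - \<alpha> i)))"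

text \<open>Dual iterates alpha^(t) driven by the index sequence is (index chosen at step t+1
  is "is t") and an update rule upd.\<close>
fun alphas :: "((nat \<Rightarrow> real) \<Rightarrow> nat \<Rightarrow> real) \<Rightarrow> (nat \<Rightarrow> nat) \<Rightarrow> nat \<Rightarrow> nat \<Rightarrow> real" where
  "alphas upd is 0 = (\<lambda>_. 0)"
| "alphas upd is (Suc t) = (let \<alpha> = alphas upd is t; i = is t in \<alpha>(i := \<alpha> i + upd \<alpha> i))"

text \<open>Expectation over i_1..i_T drawn independently uniformly from {0..n-1}.\<close>
definition expect :: "nat \<Rightarrow> nat \<Rightarrow> ((nat \<Rightarrow> nat) \<Rightarrow> real) \<Rightarrow> real" where
  "expect n T F = (\<Sum>is\<in>PiE {..<T} (\<lambda>_. {..<n}). F is) / real n ^ T"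

text \<open>Averaged output: mean of w^(t-1) over t in {T0+1..T}.\<close>
definition wavg :: "nat \<Rightarrow> real \<Rightarrow> real \<Rightarrow> (nat \<Rightarrow> nat \<Rightarrow> real) \<Rightarrow> ((nat \<Rightarrow> real) \<Rightarrow> nat \<Rightarrow> real)
    \<Rightarrow> (nat \<Rightarrow> nat) \<Rightarrow> nat \<Rightarrow> nat \<Rightarrow> nat \<Rightarrow> real" where
  "wavg n lam \<sigma> x upd is T0 T =
     (\<lambda>j. (\<Sum>t\<in>{T0..<T}. wof n lam \<sigma> x (alphas upd is t) j) / real (T - T0))"

end

theory Submission
  imports Defs "HOL-Analysis.Analysis"
begin

definition cj :: "(real \<Rightarrow> real) \<Rightarrow> real \<Rightarrow> real" where
  "cj f u = real_of_ereal (fconj f u)"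

lemma fconj_ge: "ereal (u*a - f a) \<le> fconj f u"
  unfolding fconj_def by (rule SUP_upper) auto

lemma fconj_not_minf: "fconj f u \<noteq> -\<infinity>"
  using fconj_ge[of u 0 f] by auto

lemma fconj_fin: "fconj f u \<noteq> \<infinity> \<Longrightarrow> fconj f u = ereal (cj f u)"
  unfolding cj_def using fconj_not_minf[of f u] by (cases "fconj f u") auto

lemma cj_ge: "fconj f u \<noteq> \<infinity> \<Longrightarrow> u*a - f a \<le> cj f u"
  using fconj_ge[of u a f] fconj_fin[of f u] by auto

lemma fconj_le: "(\<And>a. u*a - f a \<le> M) \<Longrightarrow> fconj f u \<le> ereal M"
  unfolding fconj_def by (rule SUP_least) auto

lemma subgrad_conj: assumes "is_subgrad f a g" shows "fconj f g = ereal (g*a - f a)"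
proof (rule antisym)
  show "fconj f g \<le> ereal (g*a - f a)"
  proof (rule fconj_le)
    fix b have "f a + g*(b-a) \<le> f b" using assms unfolding is_subgrad_def by blast
    then show "g*b - f b \<le> g*a - f a" by (simp add: algebra_simps)
  qed
  show "ereal (g*a - f a) \<le> fconj f g" by (rule fconj_ge)
qed

lemma subgrad_cj: "is_subgrad f a g \<Longrightarrow> cj f g = g*a - f a"
  using subgrad_conj unfolding cj_def by simp

lemma smooth_descent:
  assumes sm: "smooth_loss \<gamma> f" and g: "\<gamma> > 0"
  shows "f y \<le> f x + deriv f x * (y - x) + (y-x)^2/(2*\<gamma>)"
proof -
  define h where "h t = f t - deriv f x * t - (t-x)^2/(2*\<gamma>)" for t
  define h' where "h' t = deriv f t - deriv f x - (t-x)/\<gamma>" for t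
  have dif: "\<And>t. f differentiable (at t)" and lip: "\<And>a b. \<bar>deriv f a - deriv f b\<bar> \<le> (1/\<gamma>) * \<bar>a - b\<bar>"
    using sm unfolding smooth_loss_def by auto
  have D: "DERIV h t :> h' t" for t
  proof -
    have "DERIV f t :> deriv f t" using dif DERIV_deriv_iff_real_differentiable by blast
    then show ?thesis unfolding h_def h'_def using g
      by (auto intro!: derivative_eq_intros simp: field_simps)
  qed
  have "h y \<le> h x"
  proof (cases y x rule: linorder_cases)
    case less
    then obtain z where z: "y < z" "z < x" "h x - h y = (x - y) * h' z"
      using MVT2[OF less, of h h'] D by blast
    have "deriv f z - deriv f x \<ge> - (1/\<gamma>) * \<bar>z - x\<bar>" using lip[of z x] by linarith
    then have "h' z \<ge> 0" using z g unfolding h'_def by (simp add: field_simps)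
    then have "(x - y) * h' z \<ge> 0" using z by simp
    then show ?thesis using z by linarith
  next
    case equal then show ?thesis by simp
  next
    case greater
    then obtain z where z: "x < z" "z < y" "h y - h x = (y - x) * h' z"
      using MVT2[OF greater, of h h'] D by blast
    have "deriv f z - deriv f x \<le> (1/\<gamma>) * \<bar>z - x\<bar>" using lip[of z x] by linarith
    then have "h' z \<le> 0" using z g unfolding h'_def by (simp add: field_simps)
    then have "(y - x) * h' z \<le> 0" using z by (simp add: mult_nonneg_nonpos)
    then show ?thesis using z by linarith
  qed
  then show ?thesis unfolding h_def by (simp add: algebra_simps)
qed

lemma deriv_subgrad:
  assumes "convex_on UNIV f" "f differentiable (at a)"
  shows "is_subgrad f a (deriv f a)"
  unfolding is_subgrad_def
proof
  fix b
  have "DERIV f a :> deriv f a" using assms DERIV_deriv_iff_real_differentiable by blast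
  then have "f b - f a \<ge> deriv f a * (b - a)"
    by (intro convex_on_imp_above_tangent[OF assms(1)]) auto
  then show "f a + deriv f a * (b - a) \<le> f b" by simp
qed

lemma convex_subgrad_exists:
  fixes f :: "real \<Rightarrow> real"
  assumes cv: "convex_on UNIV f"
  shows "\<exists>g. is_subgrad f a g"
proof -
  define S where "S = {(f a - f b)/(a-b) | b. b < a}"
  have sl: "(f a - f b)/(a-b) \<le> (f c - f a)/(c-a)" if "b < a" "a < c" for b c
  proof -
    have "(f b - f a) / (b - a) \<le> (f b - f c) / (b - c)" "(f b - f c) / (b - c) \<le> (f a - f c) / (a - c)"
      using convex_on_slope_le[OF cv, of b c a] that by auto
    moreover have "(f b - f a) / (b - a) = (f a - f b)/(a-b)" "(f a - f c) / (a - c) = (f c - f a)/(c-a)"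
      by (simp_all add: divide_simps) (simp_all add: algebra_simps)
    ultimately show ?thesis by linarith
  qed
  have ne: "S \<noteq> {}" unfolding S_def by (auto intro!: exI[of _ "a-1"])
  have bdd: "bdd_above S" unfolding S_def bdd_above_def
    using sl[of _ "a+1"] by (intro exI[of _ "(f (a+1) - f a)/((a+1)-a)"]) auto
  define g where "g = Sup S"
  show ?thesis unfolding is_subgrad_def
  proof (intro exI allI)
    fix b
    show "f a + g * (b - a) \<le> f b"
    proof (cases b a rule: linorder_cases)
      case less
      then have "(f a - f b)/(a-b) \<le> g" unfolding g_def using bdd by (intro cSup_upper) (auto simp: S_def)
      then have "f a - f b \<le> g * (a - b)" using less by (simp add: divide_simps)
      then show ?thesis by (simp add: algebra_simps)
    next
      case equal then show ?thesis by simp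
    next
      case greater
      have "g \<le> (f b - f a)/(b-a)" unfolding g_def
        by (rule cSup_least[OF ne]) (use sl greater in \<open>auto simp: S_def\<close>)
      then have "g * (b-a) \<le> f b - f a" using greater by (simp add: divide_simps)
      then show ?thesis by (simp add: algebra_simps)
    qed
  qed
qed

lemma conj_smooth_lb:
  assumes sm: "smooth_loss \<gamma> f" and g: "\<gamma> > 0" and fr: "fconj f r \<noteq> \<infinity>"
  shows "r*b - f b + \<gamma>/2*(r - deriv f b)^2 \<le> cj f r"
proof -
  define gd where "gd = deriv f b"
  define b' where "b' = b + \<gamma>*(r-gd)"
  have "r*b' - f b' \<le> cj f r" by (rule cj_ge[OF fr])
  moreover have "f b' \<le> f b + gd*(b'-b) + (b'-b)^2/(2*\<gamma>)"
    unfolding gd_def by (rule smooth_descent[OF sm g])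
  moreover have "(b'-b)^2/(2*\<gamma>) = \<gamma>/2*(r-gd)^2" unfolding b'_def using g
    by (simp add: power2_eq_square field_simps)
  moreover have "r*b' - (f b + gd*(b'-b) + \<gamma>/2*(r-gd)^2) = r*b - f b + \<gamma>/2*(r - gd)^2"
    unfolding b'_def by (simp add: power2_eq_square algebra_simps)
  ultimately show ?thesis unfolding gd_def by linarith
qed

lemma conj_comb:
  assumes fp: "fconj f p \<noteq> \<infinity>" and fq: "fconj f q \<noteq> \<infinity>" and s: "0 \<le> s" "s \<le> 1"
    and gm: "\<gamma> = 0 \<or> (\<gamma> > 0 \<and> smooth_loss \<gamma> f)"
  shows "fconj f ((1-s)*p + s*q) \<le> ereal ((1-s)*cj f p + s*cj f q - \<gamma>/2* s*(1-s)*(p-q)^2)"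
proof (rule fconj_le)
  fix b
  define m where "m = (1-s)*p + s*q"
  show "((1-s)*p + s*q)*b - f b \<le> (1-s)*cj f p + s*cj f q - \<gamma>/2* s*(1-s)*(p-q)^2"
  proof (cases "\<gamma> = 0")
    case True
    have "p*b - f b \<le> cj f p" "q*b - f b \<le> cj f q" using cj_ge fp fq by auto
    then have "(1-s)*(p*b - f b) \<le> (1-s)*cj f p" "s*(q*b - f b) \<le> s*cj f q"
      using s by (auto intro: mult_left_mono)
    moreover have "((1-s)*p + s*q)*b - f b = (1-s)*(p*b - f b) + s*(q*b - f b)"
      by (simp add: algebra_simps)
    ultimately show ?thesis using True by simp
  next
    case False
    with gm have g: "\<gamma> > 0" and sm: "smooth_loss \<gamma> f" by auto
    define gd where "gd = deriv f b"
    have "p*b - f b + \<gamma>/2*(p - gd)^2 \<le> cj f p" "q*b - f b + \<gamma>/2*(q - gd)^2 \<le> cj f q"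
      unfolding gd_def using conj_smooth_lb[OF sm g] fp fq by auto
    then have A: "(1-s)*(p*b - f b + \<gamma>/2*(p - gd)^2) \<le> (1-s)*cj f p"
       "s*(q*b - f b + \<gamma>/2*(q - gd)^2) \<le> s*cj f q"
      using s by (auto intro: mult_left_mono)
    have sq: "(1-s)*(p - gd)^2 + s*(q - gd)^2 = (m-gd)^2 + s*(1-s)*(p-q)^2"
      unfolding m_def by (simp add: power2_eq_square algebra_simps)
    have id: "(1-s)*(p*b - f b + \<gamma>/2*(p - gd)^2) + s*(q*b - f b + \<gamma>/2*(q - gd)^2)
       = ((1-s)*p + s*q)*b - f b + \<gamma>/2*((1-s)*(p - gd)^2 + s*(q - gd)^2)"
      by (simp add: field_simps)
    have id2: "\<gamma>/2*((1-s)*(p - gd)^2 + s*(q - gd)^2) = \<gamma>/2*(m-gd)^2 + \<gamma>/2 * s*(1-s)*(p-q)^2"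
      unfolding sq by (simp add: field_simps)
    have "\<gamma>/2*(m-gd)^2 \<ge> 0" using g by simp
    then show ?thesis using A id id2 by linarith
  qed
qed

lemma quad_opt:
  fixes A D s :: real
  assumes A: "A \<ge> 0" and D: "D \<ge> 0" and DA: "D = 0 \<Longrightarrow> A = 0" and s: "0 \<le> s" "s \<le> 1"
  shows "s * A - s^2 * D / 2 \<le> min 1 (A/D) * A - (min 1 (A/D))^2 * D / 2"
proof (cases "D = 0")
  case True then show ?thesis using DA by simp
next
  case False
  then have Dp: "D > 0" using D by simp
  show ?thesis
  proof (cases "A/D \<ge> 1")
    case True
    then have AD: "A \<ge> D" using Dp by (simp add: field_simps)
    have "min 1 (A/D) = 1" using True by simp
    moreover have "s * A - s^2 * D / 2 \<le> A - D/2"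
    proof -
      have "D * s \<le> D" using s Dp by (simp add: mult_left_le)
      then have "A - (1+s) * D / 2 \<ge> 0" using AD by (simp add: field_simps)
      then have "(1 - s) * (A - (1+s) * D / 2) \<ge> 0"
        using s by (intro mult_nonneg_nonneg) auto
      then show ?thesis by (simp add: power2_eq_square field_simps)
    qed
    ultimately show ?thesis by simp
  next
    case False
    then have m: "min 1 (A/D) = A/D" by simp
    have "D/2 * (s - A/D)^2 \<ge> 0" using Dp by simp
    moreover have "A/D * A - (A/D)^2 * D / 2 - (s * A - s^2 * D / 2) = D/2 * (s - A/D)^2"
      using Dp by (simp add: power2_eq_square field_simps)
    ultimately show ?thesis unfolding m by linarith
  qed
qed

lemma coord_step:
  fixes f :: "real \<Rightarrow> real"
  assumes cv: "convex_on UNIV f" and fin: "fconj f (- al) \<noteq> \<infinity>"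
    and M: "lam * nn > 0" and c: "c > 0" "c \<le> R2"
    and gm: "\<gamma> = 0 \<or> (\<gamma> > 0 \<and> smooth_loss \<gamma> f)"
    and V: "allowV \<Longrightarrow> \<gamma> > 0 \<and> smooth_loss \<gamma> f"
    and s0: "0 \<le> s0" "s0 \<le> 1" "allowV \<Longrightarrow> s0 = lam * nn * \<gamma> / (R2 + lam * nn * \<gamma>)"
    and SC: "(\<forall>\<Delta>'. F \<Delta>' \<le> F \<Delta>) \<or> (\<exists>u. is_subgrad f a (- u) \<and> (let z = u - al in
            (\<exists>s\<in>{0..1}. \<Delta> = s * z \<and> (\<forall>s'\<in>{0..1}. F (s' * z) \<le> F (s * z)))
           \<or> \<Delta> = min 1 ((f a + real_of_ereal (fconj f (- al)) + a * al + \<gamma> / 2 * z^2)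
                      / (z^2 * (\<gamma> + c / (lam * nn)))) * z
           \<or> \<Delta> = min 1 ((f a + real_of_ereal (fconj f (- al)) + a * al + \<gamma> / 2 * z^2)
                      / (z^2 * (\<gamma> + R2 / (lam * nn)))) * z))
       \<or> (allowV \<and> \<Delta> = lam * nn * \<gamma> / (R2 + lam * nn * \<gamma>) * (- deriv f a - al))"
    and Fdef: "F = (\<lambda>\<Delta>. - fconj f (- (al + \<Delta>)) - ereal (a * \<Delta> + c * \<Delta>^2 / (2 * lam * nn)))"
  shows "fconj f (- (al + \<Delta>)) \<noteq> \<infinity> \<and> (\<exists>u. is_subgrad f a (-u) \<and>
     cj f (- al) - cj f (- (al + \<Delta>)) - (a * \<Delta> + c * \<Delta>^2 / (2 * lam * nn))
       \<ge> s0 * (f a + cj f (- al) + a * al) + s0 * (u - al)^2 / 2 * (\<gamma> * (1 - s0) - s0 * R2 / (lam * nn)))"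
proof -
  define Val where "Val = (\<lambda>\<Delta>. cj f (- al) - cj f (- (al + \<Delta>)) - (a * \<Delta> + c * \<Delta>^2 / (2 * lam * nn)))"
  define Gi where "Gi = f a + cj f (- al) + a * al"
  define LBc where "LBc = (\<lambda>z s. s * Gi + \<gamma>/2 * s * (1-s) * z^2 - c * s^2 * z^2 / (2 * lam * nn))"
  define TB where "TB = (\<lambda>z s. s * Gi + s * z^2 / 2 * (\<gamma> * (1 - s) - s * R2 / (lam * nn)))"
  have g0: "\<gamma> \<ge> 0" using gm by auto
  have lnz: "lam \<noteq> 0" "nn \<noteq> 0" using M by auto
  have FV: "F d = ereal (Val d - cj f (- al))" if "fconj f (- (al + d)) \<noteq> \<infinity>" for d
    using fconj_fin[OF that] unfolding Fdef Val_def by simp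
  have Finf: "F d = -\<infinity>" if "fconj f (- (al + d)) = \<infinity>" for d
    using that unfolding Fdef by simp
  have "- al * a - f a \<le> cj f (- al)" by (rule cj_ge[OF fin])
  then have Gi0: "Gi \<ge> 0" unfolding Gi_def by (simp add: algebra_simps)
  have TB_le: "TB z s \<le> LBc z s" if "0 \<le> s" for z s
  proof -
    have "LBc z s - TB z s = s^2 * z^2 * (R2 - c) / (2 * lam * nn)"
      unfolding LBc_def TB_def using M lnz by (simp add: power2_eq_square field_simps)
    also have "\<dots> \<ge> 0" using c M by (intro divide_nonneg_pos mult_nonneg_nonneg) auto
    finally show ?thesis by simp
  qed
  have LBs: "fconj f (- (al + s*(u-al))) \<noteq> \<infinity> \<and> Val (s*(u-al)) \<ge> LBc (u-al) s"
    if sg: "is_subgrad f a (-u)" and s: "0 \<le> s" "s \<le> 1" for u s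
  proof -
    have fq: "fconj f (- u) \<noteq> \<infinity>" using subgrad_conj[OF sg] by simp
    have cq: "cj f (- u) = - u * a - f a" using subgrad_cj[OF sg] by simp
    have eq: "(1-s) * (- al) + s * (- u) = - (al + s*(u-al))" by (simp add: algebra_simps)
    have le: "fconj f (- (al + s*(u-al))) \<le> ereal ((1-s) * cj f (- al) + s * cj f (- u) - \<gamma>/2 * s * (1-s) * (- al - - u)^2)"
      using conj_comb[OF fin fq s gm] unfolding eq .
    then have f1: "fconj f (- (al + s*(u-al))) \<noteq> \<infinity>" by auto
    have "cj f (- (al + s*(u-al))) \<le> (1-s) * cj f (- al) + s * cj f (- u) - \<gamma>/2 * s * (1-s) * (- al - - u)^2"
      using le fconj_fin[OF f1] by simp
    moreover have "(- al - - u)^2 = (u - al)^2" by (simp add: power2_eq_square algebra_simps)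
    ultimately have "cj f (- (al + s*(u-al))) \<le> (1-s) * cj f (- al) + s * cj f (- u) - \<gamma>/2 * s * (1-s) * (u - al)^2"
      by simp
    then have "Val (s*(u-al)) \<ge> cj f (- al) - ((1-s) * cj f (- al) + s * (- u * a - f a) - \<gamma>/2 * s * (1-s) * (u-al)^2)
       - (a * (s*(u-al)) + c * (s*(u-al))^2 / (2 * lam * nn))"
      unfolding Val_def cq by linarith
    moreover have "cj f (- al) - ((1-s) * cj f (- al) + s * (- u * a - f a) - \<gamma>/2 * s * (1-s) * (u-al)^2)
       - (a * (s*(u-al)) + c * (s*(u-al))^2 / (2 * lam * nn)) = LBc (u-al) s"
      unfolding LBc_def Gi_def by (simp add: power2_eq_square algebra_simps)
    ultimately show ?thesis using f1 by simp
  qed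
  have z0: "Gi = 0" if sg: "is_subgrad f a (-u)" and "u - al = 0" for u
  proof -
    have "u = al" using that by simp
    then have "cj f (- al) = - al * a - f a" using subgrad_cj[OF sg] by simp
    then show ?thesis unfolding Gi_def by (simp add: algebra_simps)
  qed
  have sopt: "LBc (u-al) s \<le> LBc (u-al) (min 1 ((f a + real_of_ereal (fconj f (- al)) + a * al + \<gamma> / 2 * (u-al)^2)
                      / ((u-al)^2 * (\<gamma> + c' / (lam * nn)))))
          + s^2 * (u-al)^2 * (c' - c) / (2*lam*nn) - (min 1 ((f a + real_of_ereal (fconj f (- al)) + a * al + \<gamma> / 2 * (u-al)^2)
                      / ((u-al)^2 * (\<gamma> + c' / (lam * nn)))))^2 * (u-al)^2 * (c' - c) / (2*lam*nn)"
    if sg: "is_subgrad f a (-u)" and s: "0 \<le> s" "s \<le> 1" and c': "c' \<ge> c" for u s c'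
  proof -
    define z where "z = u - al"
    define A where "A = Gi + \<gamma>/2 * z^2"
    define D where "D = z^2 * (\<gamma> + c' / (lam * nn))"
    have AA: "f a + real_of_ereal (fconj f (- al)) + a * al + \<gamma> / 2 * z^2 = A"
      unfolding A_def Gi_def cj_def by simp
    have cpos: "c' / (lam * nn) > 0" using c c' M by simp
    have A0: "A \<ge> 0" unfolding A_def using Gi0 g0 by simp
    have D0: "D \<ge> 0" unfolding D_def using cpos g0 by simp
    have DA: "A = 0" if "D = 0"
    proof -
      have "z = 0" using that cpos g0 unfolding D_def by (auto simp: add_pos_nonneg)
      then show ?thesis unfolding A_def using z0[OF sg] z_def by simp
    qed
    have LBc_alt: "LBc z t = t * A - t^2 * D / 2 + t^2 * z^2 * (c' - c) / (2*lam*nn)" for t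
      unfolding LBc_def A_def D_def using M lnz by (simp add: power2_eq_square field_simps)
    show ?thesis unfolding z_def[symmetric] AA
      using quad_opt[OF A0 D0 DA s] unfolding LBc_alt D_def[symmetric] by simp
  qed
  have main: "\<exists>u. is_subgrad f a (-u) \<and> fconj f (- (al + \<Delta>)) \<noteq> \<infinity> \<and> Val \<Delta> \<ge> TB (u - al) s0"
    using SC
  proof (elim disjE exE conjE)
    assume opt: "\<forall>\<Delta>'. F \<Delta>' \<le> F \<Delta>"
    obtain g where sg0: "is_subgrad f a g" using convex_subgrad_exists[OF cv] by blast
    define u where "u = - g"
    have sg: "is_subgrad f a (-u)" using sg0 u_def by simp
    from LBs[OF sg s0(1,2)] have f1: "fconj f (- (al + s0*(u-al))) \<noteq> \<infinity>"
       and v1: "Val (s0*(u-al)) \<ge> LBc (u-al) s0" by auto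
    have "F (s0*(u-al)) \<le> F \<Delta>" using opt by blast
    then have fD: "fconj f (- (al + \<Delta>)) \<noteq> \<infinity>" using FV[OF f1] Finf by force
    have "Val (s0*(u-al)) \<le> Val \<Delta>" using opt[rule_format, of "s0*(u-al)"] FV[OF f1] FV[OF fD] by simp
    then show ?thesis using sg fD v1 TB_le[OF s0(1), of "u-al"] by (intro exI[of _ u]) auto
  next
    fix u assume sg: "is_subgrad f a (-u)" and rest: "let z = u - al in
            (\<exists>s\<in>{0..1}. \<Delta> = s * z \<and> (\<forall>s'\<in>{0..1}. F (s' * z) \<le> F (s * z)))
           \<or> \<Delta> = min 1 ((f a + real_of_ereal (fconj f (- al)) + a * al + \<gamma> / 2 * z^2)
                      / (z^2 * (\<gamma> + c / (lam * nn)))) * z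
           \<or> \<Delta> = min 1 ((f a + real_of_ereal (fconj f (- al)) + a * al + \<gamma> / 2 * z^2)
                      / (z^2 * (\<gamma> + R2 / (lam * nn)))) * z"
    define z where "z = u - al"
    from LBs[OF sg s0(1,2)] have f1: "fconj f (- (al + s0*z)) \<noteq> \<infinity>"
       and v1: "Val (s0*z) \<ge> LBc z s0" unfolding z_def by auto
    have tb: "TB z s0 \<le> LBc z s0" using TB_le[OF s0(1)] .
    have sopt_range: "0 \<le> min 1 ((f a + real_of_ereal (fconj f (- al)) + a * al + \<gamma> / 2 * z^2)
                      / (z^2 * (\<gamma> + c' / (lam * nn)))) \<and> min 1 ((f a + real_of_ereal (fconj f (- al)) + a * al + \<gamma> / 2 * z^2)
                      / (z^2 * (\<gamma> + c' / (lam * nn)))) \<le> 1" if "c' \<ge> c" for c'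
    proof -
      have "f a + real_of_ereal (fconj f (- al)) + a * al + \<gamma> / 2 * z^2 \<ge> 0"
        using Gi0 g0 unfolding Gi_def cj_def by simp
      moreover have "z^2 * (\<gamma> + c' / (lam * nn)) \<ge> 0" using g0 c that M by simp
      ultimately show ?thesis by simp
    qed
    from rest[unfolded Let_def z_def[symmetric]] show ?thesis
    proof (elim disjE bexE conjE)
      fix s assume s: "s \<in> {0..1}" and D: "\<Delta> = s * z" and opt: "\<forall>s'\<in>{0..1}. F (s' * z) \<le> F (s * z)"
      have fD: "fconj f (- (al + \<Delta>)) \<noteq> \<infinity>" using LBs[OF sg] s D z_def by auto
      have "F (s0*z) \<le> F (s*z)" using opt s0 by auto
      then have "Val (s0*z) \<le> Val \<Delta>" using FV[OF f1] FV[OF fD] D by simp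
      then show ?thesis using sg fD v1 tb z_def by (intro exI[of _ u]) auto
    next
      let ?s = "min 1 ((f a + real_of_ereal (fconj f (- al)) + a * al + \<gamma> / 2 * z^2)
                      / (z^2 * (\<gamma> + c / (lam * nn))))"
      assume D: "\<Delta> = ?s * z"
      have sr: "0 \<le> ?s" "?s \<le> 1" using sopt_range[of c] by auto
      have L: "fconj f (- (al + \<Delta>)) \<noteq> \<infinity>" "Val \<Delta> \<ge> LBc z ?s" using LBs[OF sg sr] D z_def by auto
      have "LBc z s0 \<le> LBc z ?s" using sopt[OF sg s0(1,2), of c] z_def by simp
      then show ?thesis using sg L tb z_def by (intro exI[of _ u]) auto
    next
      let ?s = "min 1 ((f a + real_of_ereal (fconj f (- al)) + a * al + \<gamma> / 2 * z^2)
                      / (z^2 * (\<gamma> + R2 / (lam * nn))))"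
      assume D: "\<Delta> = ?s * z"
      have sr: "0 \<le> ?s" "?s \<le> 1" using sopt_range[of R2] c by auto
      have L: "fconj f (- (al + \<Delta>)) \<noteq> \<infinity>" "Val \<Delta> \<ge> LBc z ?s" using LBs[OF sg sr] D z_def by auto
      have "LBc z s0 \<le> LBc z ?s + s0^2 * z^2 * (R2 - c) / (2*lam*nn) - ?s^2 * z^2 * (R2 - c) / (2*lam*nn)"
        using sopt[OF sg s0(1,2), of R2] z_def c by simp
      moreover have "TB z s0 = LBc z s0 - s0^2 * z^2 * (R2 - c) / (2*lam*nn)"
        unfolding TB_def LBc_def using M lnz by (simp add: power2_eq_square field_simps)
      moreover have "TB z ?s = LBc z ?s - ?s^2 * z^2 * (R2 - c) / (2*lam*nn)"
        unfolding TB_def LBc_def using M lnz by (simp add: power2_eq_square field_simps)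
      moreover have "TB z ?s \<le> LBc z ?s" using TB_le sr by simp
      ultimately have "TB z s0 \<le> LBc z ?s" by linarith
      then show ?thesis using sg L z_def by (intro exI[of _ u]) auto
    qed
  next
    assume aV: allowV and D: "\<Delta> = lam * nn * \<gamma> / (R2 + lam * nn * \<gamma>) * (- deriv f a - al)"
    have gp: "\<gamma> > 0" and sm: "smooth_loss \<gamma> f" using V[OF aV] by auto
    have sgd: "is_subgrad f a (deriv f a)" using deriv_subgrad[OF cv] sm unfolding smooth_loss_def by auto
    define u where "u = - deriv f a"
    have sg: "is_subgrad f a (-u)" using sgd u_def by simp
    have D': "\<Delta> = s0 * (u - al)" using D s0(3)[OF aV] u_def by simp
    from LBs[OF sg s0(1,2)] show ?thesis using D' sg TB_le[OF s0(1), of "u-al"] by (intro exI[of _ u]) auto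
  qed
  then show ?thesis unfolding Val_def TB_def Gi_def by auto
qed

definition hq :: "real \<Rightarrow> real \<Rightarrow> real" where "hq k v = (max 0 (\<bar>v\<bar> - k))^2 / 2"
definition pth :: "real \<Rightarrow> real \<Rightarrow> real" where "pth k v = sgn v * max 0 (\<bar>v\<bar> - k)"

lemma hq_FE: assumes "k \<ge> 0" shows "pth k v * v = (pth k v)^2/2 + k * \<bar>pth k v\<bar> + hq k v"
  using assms unfolding hq_def pth_def
  by (cases "v > 0"; cases "v < 0"; cases "\<bar>v\<bar> \<ge> k") (auto simp: power2_eq_square field_simps abs_mult sgn_if max_def)

lemma pth_key: assumes k: "k \<ge> 0" shows "u * (v - pth k v) - k * \<bar>u\<bar> \<le> pth k v * (v - pth k v) - k * \<bar>pth k v\<bar>"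
proof (cases "\<bar>v\<bar> < k")
  case True
  then have "pth k v = 0" unfolding pth_def by simp
  moreover have "u * v \<le> k * \<bar>u\<bar>"
  proof -
    have "u * v \<le> \<bar>u\<bar> * \<bar>v\<bar>" by (metis abs_ge_self abs_mult)
    also have "\<dots> \<le> \<bar>u\<bar> * k" using True by (intro mult_left_mono) auto
    finally show ?thesis by (simp add: mult.commute)
  qed
  ultimately show ?thesis by simp
next
  case False
  show ?thesis
  proof (cases "v \<ge> 0")
    case True
    then have p: "pth k v = v - k" "v - k \<ge> 0" using False k unfolding pth_def by (auto simp: sgn_if)
    have "u * k \<le> \<bar>u\<bar> * k" using k by (intro mult_right_mono) auto
    then show ?thesis unfolding p(1) using p(2) by (simp add: algebra_simps)
  next
    case neg: False
    then have p: "pth k v = v + k" "v + k \<le> 0" using False k unfolding pth_def by (auto simp: sgn_if)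
    have "- u * k \<le> \<bar>u\<bar> * k" using k by (intro mult_right_mono) auto
    then show ?thesis unfolding p(1) using p(2) by (simp add: algebra_simps)
  qed
qed

lemma hq_sc: assumes k: "k \<ge> 0" shows "u * v - u^2/2 - k * \<bar>u\<bar> \<le> hq k v - (u - pth k v)^2/2"
proof -
  have "hq k v = pth k v * v - (pth k v)^2/2 - k * \<bar>pth k v\<bar>" using hq_FE[OF k, of v] by simp
  moreover have "(u - pth k v)^2/2 - u^2/2 + (pth k v)^2/2 = (pth k v)^2 - u * pth k v"
    by (simp add: power2_eq_square field_simps)
  ultimately show ?thesis using pth_key[OF k, of u v] unfolding power2_eq_square by (simp add: algebra_simps)
qed

lemma hq_FY: assumes k: "k \<ge> 0" shows "w * v \<le> w^2/2 + k * \<bar>w\<bar> + hq k v"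
  using hq_sc[OF k, of w v] by (smt (verit) zero_le_power2 divide_nonneg_pos)

lemma hq_SM: assumes k: "k \<ge> 0" shows "hq k (v + e) \<le> hq k v + pth k v * e + e^2/2"
proof -
  define w' where "w' = pth k (v + e)"
  define w where "w = pth k v"
  have "hq k (v+e) = w' * (v + e) - w'^2/2 - k * \<bar>w'\<bar>" using hq_FE[OF k, of "v+e"] w'_def by simp
  moreover have "w' * v - w'^2/2 - k * \<bar>w'\<bar> \<le> hq k v - (w' - w)^2/2" using hq_sc[OF k] w_def by simp
  moreover have "(w' - w) * e - (w' - w)^2/2 \<le> e^2/2"
  proof -
    have "(w' - w - e)^2 \<ge> 0" by simp
    then show ?thesis by (simp add: power2_eq_square field_simps)
  qed
  ultimately show ?thesis unfolding w_def[symmetric] by (simp add: algebra_simps)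
qed

lemma dotp_comm: "dotp d a b = dotp d b a"
  unfolding dotp_def by (simp add: mult.commute)

lemma norm2_sq: "(norm2 d a)^2 = (\<Sum>j<d. (a j)^2)"
  unfolding norm2_def by (simp add: sum_nonneg)

lemma norm2_nonneg: "norm2 d a \<ge> 0"
  unfolding norm2_def by (simp add: sum_nonneg)

lemma norm2_zero: assumes "norm2 d a = 0" "j < d" shows "a j = 0"
proof -
  have "(\<Sum>j<d. (a j)^2) = 0" using norm2_sq[of d a] assms(1) by simp
  then have "\<forall>j\<in>{..<d}. (a j)^2 = 0" by (subst sum_nonneg_eq_0_iff[symmetric]) auto
  then show ?thesis using assms(2) by simp
qed

lemma dotp_zero: "norm2 d a = 0 \<Longrightarrow> dotp d a b = 0"
  unfolding dotp_def using norm2_zero by (auto intro!: sum.neutral)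

locale sdca =
  fixes n d :: nat and \<phi> :: "nat \<Rightarrow> real \<Rightarrow> real" and x :: "nat \<Rightarrow> nat \<Rightarrow> real" and \<sigma> lam :: real
  assumes n1: "n \<ge> 1" and sp: "\<sigma> > 0" and lp: "lam > 0"
    and cvx: "\<And>i. i < n \<Longrightarrow> convex_on UNIV (\<phi> i)"
    and nonneg: "\<And>i a. i < n \<Longrightarrow> \<phi> i a \<ge> 0"
begin

definition "kap = \<sigma> / lam"
definition "nz i \<longleftrightarrow> norm2 d (x i) \<noteq> 0"
definition "psi i a = (if nz i then cj (\<phi> i) (- a) else - \<phi> i 0)"
definition "gs v = (\<Sum>j<d. hq kap (v j))"
definition "sqn (w::nat\<Rightarrow>real) = (\<Sum>j<d. (w j)^2)"
definition "Dd \<alpha> = (\<Sum>i<n. - psi i (\<alpha> i)) / real n - lam * gs (vdual n lam x \<alpha>)"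
definition "Pl w = primal0 n d \<phi> x \<sigma> w + lam / 2 * sqn w"
definition "W \<alpha> = wof n lam \<sigma> x \<alpha>"
definition "invar \<alpha> \<longleftrightarrow> (\<forall>i<n. nz i \<longrightarrow> fconj (\<phi> i) (- \<alpha> i) \<noteq> \<infinity>)"

lemma kap0: "kap \<ge> 0" unfolding kap_def using sp lp by simp
lemma npos: "real n > 0" using n1 by simp

lemma W_pth: "W \<alpha> j = pth kap (vdual n lam x \<alpha> j)"
  unfolding W_def wof_def gradgconj_def pth_def kap_def by simp

lemma inner: "lam * (\<Sum>j<d. w j * vdual n lam x \<alpha> j) = (\<Sum>i<n. \<alpha> i * dotp d (x i) w) / real n"
proof -
  have "lam * (\<Sum>j<d. w j * vdual n lam x \<alpha> j) = (\<Sum>j<d. \<Sum>i<n. w j * (\<alpha> i * x i j)) / real n"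
    unfolding vdual_def using lp npos
    by (simp add: sum_distrib_left sum_divide_distrib field_simps)
  also have "\<dots> = (\<Sum>i<n. \<Sum>j<d. \<alpha> i * (x i j * w j)) / real n"
    by (subst sum.swap) (simp add: algebra_simps)
  also have "\<dots> = (\<Sum>i<n. \<alpha> i * dotp d (x i) w) / real n"
    unfolding dotp_def by (simp add: sum_distrib_left)
  finally show ?thesis .
qed

lemma FY_vec: "lam * (\<Sum>j<d. w j * v j) \<le> lam / 2 * sqn w + \<sigma> * norm1 d w + lam * gs v"
proof -
  have "(\<Sum>j<d. w j * v j) \<le> (\<Sum>j<d. (w j)^2/2 + kap * \<bar>w j\<bar> + hq kap (v j))"
    by (intro sum_mono hq_FY kap0)
  also have "\<dots> = sqn w / 2 + kap * norm1 d w + gs v"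
    unfolding sqn_def norm1_def gs_def by (simp add: sum.distrib sum_distrib_left sum_divide_distrib)
  finally have "lam * (\<Sum>j<d. w j * v j) \<le> lam * (sqn w / 2 + kap * norm1 d w + gs v)"
    using lp by (simp add: mult_left_mono)
  also have "\<dots> = lam / 2 * sqn w + \<sigma> * norm1 d w + lam * gs v"
    unfolding kap_def using lp by (simp add: field_simps)
  finally show ?thesis .
qed

lemma FE_vec: "lam * (\<Sum>j<d. W \<alpha> j * vdual n lam x \<alpha> j) = lam / 2 * sqn (W \<alpha>) + \<sigma> * norm1 d (W \<alpha>) + lam * gs (vdual n lam x \<alpha>)"
proof -
  have "(\<Sum>j<d. W \<alpha> j * vdual n lam x \<alpha> j) = (\<Sum>j<d. (W \<alpha> j)^2/2 + kap * \<bar>W \<alpha> j\<bar> + hq kap (vdual n lam x \<alpha> j))"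
    unfolding W_pth by (intro sum.cong refl hq_FE kap0)
  also have "\<dots> = sqn (W \<alpha>) / 2 + kap * norm1 d (W \<alpha>) + gs (vdual n lam x \<alpha>)"
    unfolding sqn_def norm1_def gs_def by (simp add: sum.distrib sum_distrib_left sum_divide_distrib)
  finally have "lam * (\<Sum>j<d. W \<alpha> j * vdual n lam x \<alpha> j) = lam * (sqn (W \<alpha>) / 2 + kap * norm1 d (W \<alpha>) + gs (vdual n lam x \<alpha>))"
    by simp
  also have "\<dots> = lam / 2 * sqn (W \<alpha>) + \<sigma> * norm1 d (W \<alpha>) + lam * gs (vdual n lam x \<alpha>)"
    unfolding kap_def using lp by (simp add: field_simps)
  finally show ?thesis .
qed

lemma gap_eq: "Pl (W \<alpha>) - Dd \<alpha> = (\<Sum>i<n. \<phi> i (dotp d (x i) (W \<alpha>)) + psi i (\<alpha> i) + dotp d (x i) (W \<alpha>) * \<alpha> i) / real n"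
proof -
  have "Pl (W \<alpha>) - Dd \<alpha> = (\<Sum>i<n. \<phi> i (dotp d (x i) (W \<alpha>))) / real n + (\<Sum>i<n. psi i (\<alpha> i)) / real n
     + lam * (\<Sum>j<d. W \<alpha> j * vdual n lam x \<alpha> j)"
    unfolding Pl_def Dd_def primal0_def FE_vec by (simp add: sum_negf algebra_simps)
  also have "\<dots> = (\<Sum>i<n. \<phi> i (dotp d (x i) (W \<alpha>)) + psi i (\<alpha> i) + dotp d (x i) (W \<alpha>) * \<alpha> i) / real n"
    unfolding inner by (simp add: sum.distrib add_divide_distrib algebra_simps)
  finally show ?thesis .
qed

lemma weak_dual: assumes "invar \<alpha>" shows "Dd \<alpha> \<le> Pl w"
proof -
  have t: "0 \<le> \<phi> i (dotp d (x i) w) + psi i (\<alpha> i) + \<alpha> i * dotp d (x i) w" if "i < n" for i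
  proof (cases "nz i")
    case True
    then have "fconj (\<phi> i) (- \<alpha> i) \<noteq> \<infinity>" using assms that unfolding invar_def by auto
    from cj_ge[OF this, of "dotp d (x i) w"] show ?thesis unfolding psi_def using True by simp
  next
    case False
    then have "dotp d (x i) w = 0" using dotp_zero unfolding nz_def by auto
    then show ?thesis unfolding psi_def using False by simp
  qed
  have "0 \<le> (\<Sum>i<n. \<phi> i (dotp d (x i) w) + psi i (\<alpha> i) + \<alpha> i * dotp d (x i) w) / real n"
    using t by (intro divide_nonneg_pos sum_nonneg npos) auto
  also have "\<dots> = (\<Sum>i<n. \<phi> i (dotp d (x i) w)) / real n + (\<Sum>i<n. psi i (\<alpha> i)) / real n
       + lam * (\<Sum>j<d. w j * vdual n lam x \<alpha> j)"
    unfolding inner by (simp add: sum.distrib add_divide_distrib algebra_simps)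
  also have "\<dots> \<le> (\<Sum>i<n. \<phi> i (dotp d (x i) w)) / real n + (\<Sum>i<n. psi i (\<alpha> i)) / real n
       + lam / 2 * sqn w + \<sigma> * norm1 d w + lam * gs (vdual n lam x \<alpha>)"
    using FY_vec[of w "vdual n lam x \<alpha>"] by simp
  also have "\<dots> = Pl w - Dd \<alpha>"
    unfolding Pl_def Dd_def primal0_def by (simp add: sum_negf algebra_simps)
  finally show ?thesis by simp
qed

end

context sdca begin

lemma sum_upd: fixes f :: "nat \<Rightarrow> real \<Rightarrow> real" assumes "i < n"
  shows "(\<Sum>k<n. f k ((\<alpha>(i := \<alpha> i + \<Delta>)) k)) = (\<Sum>k<n. f k (\<alpha> k)) + (f i (\<alpha> i + \<Delta>) - f i (\<alpha> i))"
proof -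
  have "(\<Sum>k<n. f k ((\<alpha>(i := \<alpha> i + \<Delta>)) k)) = (\<Sum>k<n. f k (\<alpha> k) + (if k = i then f i (\<alpha> i + \<Delta>) - f i (\<alpha> i) else 0))"
    by (rule sum.cong) auto
  also have "\<dots> = (\<Sum>k<n. f k (\<alpha> k)) + (f i (\<alpha> i + \<Delta>) - f i (\<alpha> i))"
    using assms by (simp add: sum.distrib)
  finally show ?thesis .
qed

lemma vdual_upd: assumes "i < n"
  shows "vdual n lam x (\<alpha>(i := \<alpha> i + \<Delta>)) j = vdual n lam x \<alpha> j + \<Delta> * x i j / (lam * real n)"
proof -
  have "(\<Sum>k<n. (\<alpha>(i := \<alpha> i + \<Delta>)) k * x k j) = (\<Sum>k<n. \<alpha> k * x k j) + ((\<alpha> i + \<Delta>) * x i j - \<alpha> i * x i j)"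
    using sum_upd[OF assms, of "\<lambda>k a. a * x k j" \<alpha> \<Delta>] by simp
  then show ?thesis unfolding vdual_def by (simp add: add_divide_distrib algebra_simps)
qed

lemma dual_step: assumes i: "i < n"
  shows "real n * (Dd (\<alpha>(i := \<alpha> i + \<Delta>)) - Dd \<alpha>) \<ge> psi i (\<alpha> i) - psi i (\<alpha> i + \<Delta>)
     - (dotp d (x i) (W \<alpha>) * \<Delta> + (norm2 d (x i))^2 * \<Delta>^2 / (2 * lam * real n))"
proof -
  define v where "v = vdual n lam x \<alpha>"
  define e where "e j = \<Delta> * x i j / (lam * real n)" for j
  have v': "vdual n lam x (\<alpha>(i := \<alpha> i + \<Delta>)) = (\<lambda>j. v j + e j)"
    using vdual_upd[OF i] unfolding v_def e_def by auto
  have "gs (\<lambda>j. v j + e j) \<le> (\<Sum>j<d. hq kap (v j) + pth kap (v j) * e j + (e j)^2/2)"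
    unfolding gs_def by (intro sum_mono hq_SM kap0)
  also have "\<dots> = gs v + (\<Sum>j<d. W \<alpha> j * e j) + (\<Sum>j<d. (e j)^2)/2"
    unfolding gs_def W_pth v_def by (simp add: sum.distrib sum_divide_distrib)
  also have "(\<Sum>j<d. W \<alpha> j * e j) = \<Delta> / (lam * real n) * dotp d (x i) (W \<alpha>)"
    unfolding e_def dotp_def by (simp add: sum_distrib_left algebra_simps)
  also have "(\<Sum>j<d. (e j)^2) = \<Delta>^2 / (lam * real n)^2 * (norm2 d (x i))^2"
    unfolding e_def norm2_sq by (simp add: sum_distrib_left sum_divide_distrib power_divide power_mult_distrib algebra_simps)
  finally have G: "gs (\<lambda>j. v j + e j) \<le> gs v + \<Delta> / (lam * real n) * dotp d (x i) (W \<alpha>)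
      + \<Delta>^2 / (lam * real n)^2 * (norm2 d (x i))^2 / 2" .
  have S: "(\<Sum>k<n. - psi k ((\<alpha>(i := \<alpha> i + \<Delta>)) k)) = (\<Sum>k<n. - psi k (\<alpha> k)) + (psi i (\<alpha> i) - psi i (\<alpha> i + \<Delta>))"
    using sum_upd[OF i, of "\<lambda>k a. - psi k a" \<alpha> \<Delta>] by simp
  have "real n * (Dd (\<alpha>(i := \<alpha> i + \<Delta>)) - Dd \<alpha>) = (psi i (\<alpha> i) - psi i (\<alpha> i + \<Delta>))
      - real n * lam * (gs (\<lambda>j. v j + e j) - gs v)"
    unfolding Dd_def v' S v_def[symmetric] using npos by (simp add: field_simps)
  moreover have "real n * lam * (gs (\<lambda>j. v j + e j) - gs v) \<le> real n * lam * (\<Delta> / (lam * real n) * dotp d (x i) (W \<alpha>)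
      + \<Delta>^2 / (lam * real n)^2 * (norm2 d (x i))^2 / 2)"
    using G npos lp by (intro mult_left_mono) auto
  moreover have "real n * lam * (\<Delta> / (lam * real n) * dotp d (x i) (W \<alpha>)
      + \<Delta>^2 / (lam * real n)^2 * (norm2 d (x i))^2 / 2) = dotp d (x i) (W \<alpha>) * \<Delta> + (norm2 d (x i))^2 * \<Delta>^2 / (2 * lam * real n)"
    using npos lp by (simp add: power2_eq_square field_simps)
  ultimately show ?thesis by linarith
qed

lemma D0: "Dd (\<lambda>_. 0) \<ge> 0" and inv0: "invar (\<lambda>_. 0)"
proof -
  have f0: "fconj (\<phi> i) 0 \<le> ereal 0" if "i < n" for i
    by (rule fconj_le) (use nonneg[OF that] in simp)
  have ps: "psi i 0 \<le> 0" if "i < n" for i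
    using f0[OF that] nonneg[OF that, of 0] unfolding psi_def cj_def
    by (cases "fconj (\<phi> i) 0") auto
  moreover have "vdual n lam x (\<lambda>_. 0) = (\<lambda>_. 0)" unfolding vdual_def by simp
  moreover have "gs (\<lambda>_. 0) = 0" unfolding gs_def hq_def using kap0 by simp
  moreover have "(\<Sum>i<n. - psi i 0) \<ge> 0" using ps by (intro sum_nonneg) auto
  ultimately show "Dd (\<lambda>_. 0) \<ge> 0" unfolding Dd_def
    using npos by (simp add: divide_nonneg_pos)
  show "invar (\<lambda>_. 0)" unfolding invar_def
  proof (intro allI impI)
    fix i assume "i < n"
    then have "fconj (\<phi> i) 0 \<le> ereal 0" by (rule f0)
    then show "fconj (\<phi> i) (- 0) \<noteq> \<infinity>" by auto
  qed
qed

lemma P0: "Pl (\<lambda>_. 0) = (\<Sum>i<n. \<phi> i 0) / real n"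
  unfolding Pl_def primal0_def sqn_def norm1_def dotp_def by simp

end

context sdca begin

lemma step_bound:
  assumes inv: "invar \<alpha>" and i: "i < n"
    and st: "step_ok \<phi> d n lam \<sigma> x R \<gamma> allowV \<alpha> i \<Delta>"
    and R: "norm2 d (x i) \<le> R"
    and gm: "\<gamma> = 0 \<or> (\<gamma> > 0 \<and> smooth_loss \<gamma> (\<phi> i))"
    and V: "allowV \<Longrightarrow> \<gamma> > 0 \<and> smooth_loss \<gamma> (\<phi> i)"
    and s0: "0 \<le> s0" "s0 \<le> 1" "allowV \<Longrightarrow> s0 = lam * real n * \<gamma> / (R^2 + lam * real n * \<gamma>)"
  shows "invar (\<alpha>(i := \<alpha> i + \<Delta>)) \<and> (\<exists>u. (nz i \<longrightarrow> is_subgrad (\<phi> i) (dotp d (x i) (W \<alpha>)) (-u)) \<and>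
     real n * (Dd (\<alpha>(i := \<alpha> i + \<Delta>)) - Dd \<alpha>) \<ge> s0 * (\<phi> i (dotp d (x i) (W \<alpha>)) + psi i (\<alpha> i) + dotp d (x i) (W \<alpha>) * \<alpha> i)
        + (if nz i then s0 * (u - \<alpha> i)^2 / 2 * (\<gamma> * (1 - s0) - s0 * R^2 / (lam * real n)) else 0))"
proof (cases "nz i")
  case False
  then have z: "norm2 d (x i) = 0" unfolding nz_def by simp
  then have a0: "dotp d (x i) (W \<alpha>) = 0" by (rule dotp_zero)
  have "real n * (Dd (\<alpha>(i := \<alpha> i + \<Delta>)) - Dd \<alpha>) \<ge> 0"
    using dual_step[OF i, of \<alpha> \<Delta>] unfolding a0 z psi_def using False by simp
  moreover have "invar (\<alpha>(i := \<alpha> i + \<Delta>))" using inv False unfolding invar_def by auto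
  ultimately show ?thesis using False a0 unfolding psi_def by auto
next
  case True
  define a where "a = dotp d (x i) (W \<alpha>)"
  define c where "c = (norm2 d (x i))^2"
  have cpos: "c > 0" using True norm2_nonneg[of d "x i"] unfolding c_def nz_def by simp
  have cR: "c \<le> R^2" unfolding c_def using R norm2_nonneg[of d "x i"] by (intro power_mono) auto
  have fin: "fconj (\<phi> i) (- \<alpha> i) \<noteq> \<infinity>" using inv i True unfolding invar_def by auto
  have M: "lam * real n > 0" using lp npos by simp
  have Fdef: "coord_obj \<phi> d n lam x (W \<alpha>) i \<alpha> = (\<lambda>\<Delta>. - fconj (\<phi> i) (- (\<alpha> i + \<Delta>)) - ereal (a * \<Delta> + c * \<Delta>^2 / (2 * lam * real n)))"
    unfolding coord_obj_def a_def c_def by (rule ext) (simp add: dotp_comm)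
  have SC: "(\<forall>\<Delta>'. coord_obj \<phi> d n lam x (W \<alpha>) i \<alpha> \<Delta>' \<le> coord_obj \<phi> d n lam x (W \<alpha>) i \<alpha> \<Delta>) \<or> (\<exists>u. is_subgrad (\<phi> i) a (- u) \<and> (let z = u - \<alpha> i in
            (\<exists>s\<in>{0..1}. \<Delta> = s * z \<and> (\<forall>s'\<in>{0..1}. coord_obj \<phi> d n lam x (W \<alpha>) i \<alpha> (s' * z) \<le> coord_obj \<phi> d n lam x (W \<alpha>) i \<alpha> (s * z)))
           \<or> \<Delta> = min 1 ((\<phi> i a + real_of_ereal (fconj (\<phi> i) (- \<alpha> i)) + a * \<alpha> i + \<gamma> / 2 * z^2)
                      / (z^2 * (\<gamma> + c / (lam * real n)))) * z
           \<or> \<Delta> = min 1 ((\<phi> i a + real_of_ereal (fconj (\<phi> i) (- \<alpha> i)) + a * \<alpha> i + \<gamma> / 2 * z^2)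
                      / (z^2 * (\<gamma> + R^2 / (lam * real n)))) * z))
       \<or> (allowV \<and> \<Delta> = lam * real n * \<gamma> / (R^2 + lam * real n * \<gamma>) * (- deriv (\<phi> i) a - \<alpha> i))"
    using st unfolding step_ok_def Let_def s_opt_def a_def c_def W_def by simp
  note cs = coord_step[OF cvx[OF i] fin M cpos cR gm V s0 SC Fdef]
  then have fin': "fconj (\<phi> i) (- (\<alpha> i + \<Delta>)) \<noteq> \<infinity>" by simp
  from cs obtain u where sg: "is_subgrad (\<phi> i) a (-u)" and
    b: "cj (\<phi> i) (- \<alpha> i) - cj (\<phi> i) (- (\<alpha> i + \<Delta>)) - (a * \<Delta> + c * \<Delta>^2 / (2 * lam * real n))
       \<ge> s0 * (\<phi> i a + cj (\<phi> i) (- \<alpha> i) + a * \<alpha> i) + s0 * (u - \<alpha> i)^2 / 2 * (\<gamma> * (1 - s0) - s0 * R^2 / (lam * real n))"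
    by blast
  have "real n * (Dd (\<alpha>(i := \<alpha> i + \<Delta>)) - Dd \<alpha>) \<ge> cj (\<phi> i) (- \<alpha> i) - cj (\<phi> i) (- (\<alpha> i + \<Delta>)) - (a * \<Delta> + c * \<Delta>^2 / (2 * lam * real n))"
    using dual_step[OF i, of \<alpha> \<Delta>] True unfolding psi_def a_def c_def by simp
  moreover have "invar (\<alpha>(i := \<alpha> i + \<Delta>))" using inv fin' unfolding invar_def by auto
  ultimately show ?thesis using b sg True unfolding psi_def a_def[symmetric] by (intro conjI exI[of _ u]) auto
qed

end

lemma card_PiE_n: "card (PiE {..<T} (\<lambda>_. {..<n::nat})) = n ^ T"
  by (simp add: card_PiE)

lemma expect_succ:
  assumes n: "n \<ge> 1"
  shows "expect n (Suc t) F = expect n t (\<lambda>is. (\<Sum>i<n. F (is(t := i))) / real n)"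
proof -
  have e: "PiE {..<Suc t} (\<lambda>_. {..<n}) = (\<lambda>(y, g). g(t := y)) ` ({..<n} \<times> PiE {..<t} (\<lambda>_. {..<n}))"
    using PiE_insert_eq[of t "{..<t}" "\<lambda>_. {..<n}"] by (simp add: lessThan_Suc)
  have inj: "inj_on (\<lambda>(y, g). g(t := y)) ({..<n} \<times> PiE {..<t} (\<lambda>_. {..<n::nat}))"
    using inj_combinator[of t "{..<t}" "\<lambda>_. {..<n}"] by simp
  have "(\<Sum>is\<in>PiE {..<Suc t} (\<lambda>_. {..<n}). F is) = (\<Sum>p\<in>{..<n} \<times> PiE {..<t} (\<lambda>_. {..<n}). F ((\<lambda>(y, g). g(t := y)) p))"
    unfolding e by (rule sum.reindex[OF inj, unfolded comp_def])
  also have "\<dots> = (\<Sum>y<n. \<Sum>g\<in>PiE {..<t} (\<lambda>_. {..<n}). F (g(t := y)))"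
    by (simp add: sum.cartesian_product split_beta)
  also have "\<dots> = (\<Sum>g\<in>PiE {..<t} (\<lambda>_. {..<n}). \<Sum>y<n. F (g(t := y)))"
    by (rule sum.swap)
  finally have S: "(\<Sum>is\<in>PiE {..<Suc t} (\<lambda>_. {..<n}). F is) = (\<Sum>g\<in>PiE {..<t} (\<lambda>_. {..<n}). \<Sum>y<n. F (g(t := y)))" .
  show ?thesis unfolding expect_def S using n
    by (simp add: sum_divide_distrib[symmetric] field_simps)
qed

lemma expect_indep:
  assumes n: "n \<ge> 1" and dep: "\<And>is is'. (\<forall>k<t. is k = is' k) \<Longrightarrow> F is = F is'" and tT: "t \<le> T"
  shows "expect n T F = expect n t F"
  using tT
proof (induction T)
  case 0 then show ?case by simp
next
  case (Suc T)
  show ?case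
  proof (cases "t = Suc T")
    case True then show ?thesis by simp
  next
    case False
    then have tT: "t \<le> T" using Suc.prems by simp
    have "F (js(T := i)) = F js" for js i by (rule dep) (use tT in auto)
    then have "expect n (Suc T) F = expect n T F"
      unfolding expect_succ[OF n] using n by simp
    then show ?thesis using Suc.IH tT by simp
  qed
qed

lemma expect_const: "n \<ge> 1 \<Longrightarrow> expect n T (\<lambda>_. c) = c"
  unfolding expect_def by (simp add: card_PiE)

lemma expect_add: "expect n T (\<lambda>is. F is + G is) = expect n T F + expect n T G"
  unfolding expect_def by (simp add: sum.distrib add_divide_distrib)

lemma expect_diff: "expect n T (\<lambda>is. F is - G is) = expect n T F - expect n T G"
  unfolding expect_def by (simp add: sum_subtractf diff_divide_distrib)

lemma expect_cmult: "expect n T (\<lambda>is. c * F is) = c * expect n T F"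
  unfolding expect_def by (simp add: sum_distrib_left)

lemma expect_sum: "finite S \<Longrightarrow> expect n T (\<lambda>is. \<Sum>k\<in>S. F k is) = (\<Sum>k\<in>S. expect n T (F k))"
  unfolding expect_def by (simp add: sum.swap[of _ S] sum_divide_distrib)

lemma expect_mono:
  assumes "\<And>is. is \<in> PiE {..<T} (\<lambda>_. {..<n}) \<Longrightarrow> F is \<le> G is"
  shows "expect n T F \<le> expect n T G"
  unfolding expect_def by (intro divide_right_mono sum_mono assms) auto

lemma alphas_dep: "(\<forall>k<t. is k = is' k) \<Longrightarrow> alphas upd is t = alphas upd is' t"
  by (induction t) (auto simp: Let_def)

locale sdca_run = sdca +
  fixes upd :: "(nat \<Rightarrow> real) \<Rightarrow> nat \<Rightarrow> real" and s0 K :: real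
  assumes stepb: "\<And>\<alpha> i. invar \<alpha> \<Longrightarrow> i < n \<Longrightarrow> invar (\<alpha>(i := \<alpha> i + upd \<alpha> i)) \<and>
     real n * (Dd (\<alpha>(i := \<alpha> i + upd \<alpha> i)) - Dd \<alpha>) \<ge> s0 * (\<phi> i (dotp d (x i) (W \<alpha>)) + psi i (\<alpha> i) + dotp d (x i) (W \<alpha>) * \<alpha> i) - K"
begin

lemma reach: "(\<forall>k<t. js k < n) \<Longrightarrow> invar (alphas upd js t)"
proof (induction t)
  case 0 then show ?case using inv0 by simp
next
  case (Suc t)
  then have "invar (alphas upd js t)" "js t < n" by auto
  from conjunct1[OF stepb[OF this]] show ?case by (simp only: alphas.simps Let_def)
qed

definition "Pinf = (INF w. Pl w)"

lemma bdd: "bdd_below (range Pl)"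
  unfolding bdd_below_def using weak_dual[OF inv0] by auto

lemma Pinf_le: "Pinf \<le> Pl w"
  unfolding Pinf_def using bdd by (rule cINF_lower) auto

lemma Dd_le_Pinf: "invar \<alpha> \<Longrightarrow> Dd \<alpha> \<le> Pinf"
  unfolding Pinf_def by (rule cINF_greatest) (auto intro: weak_dual)

definition "Ed t = expect n t (\<lambda>js. Dd (alphas upd js t))"
definition "Gap t = expect n t (\<lambda>js. Pl (W (alphas upd js t)) - Dd (alphas upd js t))"

lemma PiE_lt: "js \<in> PiE {..<t} (\<lambda>_. {..<n}) \<Longrightarrow> \<forall>k<t. js k < n"
  by auto

lemma Ed_le: "Ed t \<le> Pinf"
proof -
  have "Ed t \<le> expect n t (\<lambda>_. Pinf)" unfolding Ed_def
    by (intro expect_mono Dd_le_Pinf reach PiE_lt)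
  then show ?thesis using expect_const n1 by simp
qed

lemma Gap_ge: "Gap t \<ge> Pinf - Ed t"
proof -
  have "expect n t (\<lambda>_. Pinf) \<le> expect n t (\<lambda>js. Pl (W (alphas upd js t)))"
    by (intro expect_mono Pinf_le)
  then show ?thesis unfolding Gap_def Ed_def expect_diff using expect_const n1 by simp
qed

lemma Gap_nonneg: "Gap t \<ge> 0"
proof -
  have "expect n t (\<lambda>_. 0) \<le> Gap t" unfolding Gap_def
  proof (rule expect_mono)
    fix js assume "js \<in> PiE {..<t} (\<lambda>_. {..<n})"
    from weak_dual[OF reach[OF PiE_lt[OF this]]] show "0 \<le> Pl (W (alphas upd js t)) - Dd (alphas upd js t)" by simp
  qed
  then show ?thesis using expect_const n1 by simp
qed

lemma Ed_step: "Ed (Suc t) - Ed t \<ge> s0 / real n * Gap t - K / real n"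
proof -
  define st where "st \<alpha> i = \<alpha>(i := \<alpha> i + upd \<alpha> i)" for \<alpha> i
  have A: "alphas upd (js(t := i)) (Suc t) = st (alphas upd js t) i" for js i
  proof -
    have "alphas upd (js(t := i)) t = alphas upd js t" by (rule alphas_dep) auto
    then show ?thesis unfolding st_def by (simp add: Let_def)
  qed
  have E1: "Ed (Suc t) = expect n t (\<lambda>js. (\<Sum>i<n. Dd (st (alphas upd js t) i)) / real n)"
  proof -
    have "Ed (Suc t) = expect n t (\<lambda>js. (\<Sum>i<n. Dd (alphas upd (js(t:=i)) (Suc t))) / real n)"
      unfolding Ed_def by (rule expect_succ[OF n1])
    then show ?thesis by (simp only: A)
  qed
  have pt: "(\<Sum>i<n. Dd (st (alphas upd js t) i)) / real n - Dd (alphas upd js t)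
      \<ge> s0 / real n * (Pl (W (alphas upd js t)) - Dd (alphas upd js t)) - K / real n"
    if js: "js \<in> PiE {..<t} (\<lambda>_. {..<n})" for js
  proof -
    define \<alpha> where "\<alpha> = alphas upd js t"
    have inv: "invar \<alpha>" unfolding \<alpha>_def by (rule reach[OF PiE_lt[OF js]])
    define G where "G i = \<phi> i (dotp d (x i) (W \<alpha>)) + psi i (\<alpha> i) + dotp d (x i) (W \<alpha>) * \<alpha> i" for i
    have b: "Dd (st \<alpha> i) - Dd \<alpha> \<ge> (s0 * G i - K) / real n" if "i < n" for i
      using stepb[OF inv that] npos unfolding st_def G_def by (simp add: field_simps)
    have "(\<Sum>i<n. Dd (st \<alpha> i)) / real n - Dd \<alpha> = (\<Sum>i<n. Dd (st \<alpha> i) - Dd \<alpha>) / real n"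
      using npos by (simp add: sum_subtractf field_simps)
    also have "\<dots> \<ge> (\<Sum>i<n. (s0 * G i - K) / real n) / real n"
      using b npos by (intro divide_right_mono sum_mono) auto
    also have "(\<Sum>i<n. (s0 * G i - K) / real n) / real n = s0 / real n * ((\<Sum>i<n. G i) / real n) - K / real n"
      using npos by (simp add: sum_subtractf sum_distrib_left[symmetric] sum_divide_distrib[symmetric] field_simps)
    also have "(\<Sum>i<n. G i) / real n = Pl (W \<alpha>) - Dd \<alpha>" unfolding G_def gap_eq ..
    finally show ?thesis unfolding \<alpha>_def .
  qed
  have "Ed (Suc t) - Ed t = expect n t (\<lambda>js. (\<Sum>i<n. Dd (st (alphas upd js t) i)) / real n - Dd (alphas upd js t))"
    unfolding E1 by (simp only: Ed_def[of t] expect_diff)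
  also have "\<dots> \<ge> expect n t (\<lambda>js. s0 / real n * (Pl (W (alphas upd js t)) - Dd (alphas upd js t)) - K / real n)"
    by (intro expect_mono pt)
  also have "expect n t (\<lambda>js. s0 / real n * (Pl (W (alphas upd js t)) - Dd (alphas upd js t)) - K / real n)
     = s0 / real n * Gap t - K / real n"
    unfolding expect_diff expect_cmult Gap_def using expect_const n1 by simp
  finally show ?thesis .
qed

end

lemma prod_le_pow:
  fixes S :: real
  assumes "0 \<le> a" "a \<le> S" "0 \<le> b" "b \<le> S^k"
  shows "a * b \<le> S^(Suc k)"
proof -
  have "a * b \<le> S * S^k" using assms by (intro mult_mono) auto
  then show ?thesis by simp
qed

lemma num_smooth:
  fixes S n R B \<epsilon> \<gamma> :: real
  assumes S: "S \<ge> 2" and n: "0 \<le> n" "n \<le> S" and R: "0 \<le> R" "R \<le> S" and B: "0 \<le> B" "B \<le> S"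
    and e: "\<epsilon> > 0" "1/\<epsilon> \<le> S" and g: "\<gamma> > 0" "1/\<gamma> \<le> S"
  shows "2 * (n + R^2 * B^2 / (\<epsilon> * \<gamma>)) / \<epsilon> \<le> S^9"
proof -
  define a where "a = 1/\<epsilon>"
  define c where "c = 1/\<gamma>"
  have ie: "0 \<le> a" "a \<le> S" and ig: "0 \<le> c" "c \<le> S" using e g unfolding a_def c_def by auto
  have p1: "a * c \<le> S^2" using prod_le_pow[of a S c 1] ie ig by (simp add: power2_eq_square)
  have p2: "a * (a * c) \<le> S^3" using prod_le_pow[of a S _ 2] p1 ie ig by simp
  have p3: "B * (a * (a * c)) \<le> S^4" using prod_le_pow[of B S _ 3] p2 ie ig B by simp
  have p4: "B * (B * (a * (a * c))) \<le> S^5" using prod_le_pow[of B S _ 4] p3 ie ig B by simp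
  have p5: "R * (B * (B * (a * (a * c)))) \<le> S^6" using prod_le_pow[of R S _ 5] p4 ie ig B R by simp
  have "R * (R * (B * (B * (a * (a * c))))) \<le> S^7" using prod_le_pow[of R S _ 6] p5 ie ig B R by simp
  moreover have "n * a \<le> S^2" using prod_le_pow[of n S a 1] n ie by (simp add: power2_eq_square)
  moreover have "S^2 \<le> S^7" using S by (intro power_increasing) auto
  moreover have "4 * S^7 \<le> S^9"
  proof -
    have "4 \<le> S^2" using S power_mono[of 2 S 2] by simp
    then have "4 * S^7 \<le> S^2 * S^7" using S by (intro mult_right_mono) auto
    then show ?thesis by (simp add: power_add[symmetric])
  qed
  moreover have "2 * (n + R^2 * B^2 / (\<epsilon> * \<gamma>)) / \<epsilon> = 2 * (n * a) + 2 * (R * (R * (B * (B * (a * (a * c))))))"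
    unfolding a_def c_def using e g by (simp add: power2_eq_square field_simps)
  ultimately show ?thesis by linarith
qed

context sdca_run begin

lemma Ed0: "Ed 0 = Dd (\<lambda>_. 0)"
  unfolding Ed_def using expect_const[OF n1] by simp

lemma e0: "(\<Sum>i<n. \<phi> i 0) / real n \<le> 1 \<Longrightarrow> Pinf - Ed 0 \<le> 1"
  using Pinf_le[of "\<lambda>_. 0"] P0 D0 Ed0 by linarith

lemma e_nonneg: "Pinf - Ed t \<ge> 0" using Ed_le[of t] by simp

lemma expect_primal:
  "expect n t (\<lambda>js. primal0 n d \<phi> x \<sigma> (W (alphas upd js t))) \<le> Gap t + primal0 n d \<phi> x \<sigma> ws + lam / 2 * sqn ws"
proof -
  have "expect n t (\<lambda>js. primal0 n d \<phi> x \<sigma> (W (alphas upd js t)))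
     \<le> expect n t (\<lambda>js. (Pl (W (alphas upd js t)) - Dd (alphas upd js t)) + (primal0 n d \<phi> x \<sigma> ws + lam / 2 * sqn ws))"
  proof (rule expect_mono)
    fix js assume js: "js \<in> PiE {..<t} (\<lambda>_. {..<n})"
    have "Dd (alphas upd js t) \<le> Pl ws" by (rule weak_dual[OF reach[OF PiE_lt[OF js]]])
    moreover have "sqn (W (alphas upd js t)) \<ge> 0" unfolding sqn_def by (simp add: sum_nonneg)
    ultimately show "primal0 n d \<phi> x \<sigma> (W (alphas upd js t))
      \<le> (Pl (W (alphas upd js t)) - Dd (alphas upd js t)) + (primal0 n d \<phi> x \<sigma> ws + lam / 2 * sqn ws)"
      unfolding Pl_def using lp by (simp add: mult_nonneg_nonneg)
  qed
  also have "\<dots> = Gap t + (primal0 n d \<phi> x \<sigma> ws + lam / 2 * sqn ws)"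
    unfolding expect_add Gap_def using expect_const[OF n1] by simp
  finally show ?thesis by simp
qed

lemma geo_smooth:
  assumes K: "K = 0" and s: "s0 > 0" "s0 \<le> 1"
  shows "Pinf - Ed t \<le> (1 - s0 / real n)^t * (Pinf - Ed 0)"
proof (induction t)
  case 0 then show ?case by simp
next
  case (Suc t)
  have q: "0 \<le> 1 - s0 / real n" using s n1 npos by (simp add: field_simps)
  have "Pinf - Ed (Suc t) \<le> Pinf - Ed t - s0 / real n * Gap t" using Ed_step[of t] K by simp
  also have "\<dots> \<le> Pinf - Ed t - s0 / real n * (Pinf - Ed t)"
    using Gap_ge[of t] s npos by (intro diff_left_mono mult_left_mono) auto
  also have "\<dots> = (1 - s0 / real n) * (Pinf - Ed t)" by (simp add: algebra_simps)
  also have "\<dots> \<le> (1 - s0 / real n) * ((1 - s0 / real n)^t * (Pinf - Ed 0))"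
    using Suc.IH q by (intro mult_left_mono) auto
  finally show ?case by simp
qed

lemma gap_smooth:
  assumes K: "K = 0" and s: "s0 > 0"
  shows "Gap t \<le> real n / s0 * (Pinf - Ed t)"
proof -
  have "s0 / real n * Gap t \<le> Pinf - Ed t" using Ed_step[of t] Ed_le[of "Suc t"] K by simp
  then show ?thesis using s npos by (simp add: field_simps)
qed

end

lemma smooth_main:
  fixes n d :: nat and \<phi> :: "nat \<Rightarrow> real \<Rightarrow> real" and x :: "nat \<Rightarrow> nat \<Rightarrow> real"
    and \<sigma> \<epsilon> B R \<gamma> :: real and wstar :: "nat \<Rightarrow> real" and upd :: "(nat \<Rightarrow> real) \<Rightarrow> nat \<Rightarrow> real" and T :: nat
  assumes n1: "n \<ge> 1" and sp: "\<sigma> > 0" and ep: "\<epsilon> > 0" and gp: "\<gamma> > 0"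
    and phi: "\<forall>i<n. convex_on UNIV (\<phi> i) \<and> (\<forall>a. \<phi> i a \<ge> 0) \<and> smooth_loss \<gamma> (\<phi> i)"
    and s1: "(\<Sum>i<n. \<phi> i 0) / real n \<le> 1" and Bp: "B > 0" and wB: "norm2 d wstar \<le> B"
    and xR: "\<forall>i<n. norm2 d (x i) \<le> R"
    and st: "\<forall>\<alpha> i. i < n \<longrightarrow> step_ok \<phi> d n (\<epsilon> / B^2) \<sigma> x R \<gamma> True \<alpha> i (upd \<alpha> i)"
    and T: "real T \<ge> 10 * (real n + R^2 * B^2 / (\<epsilon> * \<gamma>))
                 * ln (2 + real n + \<epsilon> + 1/\<epsilon> + R + 1/R + B + 1/B + \<gamma> + 1/\<gamma>)"
  shows "expect n T (\<lambda>is. primal0 n d \<phi> x \<sigma> (wof n (\<epsilon> / B^2) \<sigma> x (alphas upd is T)))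
            - primal0 n d \<phi> x \<sigma> wstar \<le> \<epsilon>"
proof -
  define lam where "lam = \<epsilon> / B^2"
  have lp: "lam > 0" unfolding lam_def using ep Bp by simp
  interpret S: sdca n d \<phi> x \<sigma> lam
    by unfold_locales (use n1 sp lp phi in auto)
  have R0: "R \<ge> 0" using xR n1 norm2_nonneg[of d "x 0"] by (meson dual_order.trans less_le_trans zero_less_one)
  define s where "s = lam * real n * \<gamma> / (R^2 + lam * real n * \<gamma>)"
  have lng: "lam * real n * \<gamma> > 0" using lp S.npos gp by simp
  have den: "R^2 + lam * real n * \<gamma> > 0" using lng by (simp add: add_nonneg_pos)
  have s0: "s > 0" "s \<le> 1" unfolding s_def using lng den by (auto simp: divide_pos_pos divide_le_eq_1)
  have ex0: "\<gamma> * (1 - s) - s * R^2 / (lam * real n) = 0"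
  proof -
    define M where "M = lam * real n"
    have Mp: "M > 0" unfolding M_def using lp S.npos by simp
    have dn: "R^2 + M * \<gamma> \<noteq> 0" using den unfolding M_def by simp
    have e1: "1 - M * \<gamma> / (R^2 + M * \<gamma>) = R^2 / (R^2 + M * \<gamma>)"
      using dn by (simp add: field_simps)
    have e2: "M * \<gamma> / (R^2 + M * \<gamma>) * R^2 / M = \<gamma> * (R^2 / (R^2 + M * \<gamma>))"
      using Mp by simp
    have "\<gamma> * (1 - M * \<gamma> / (R^2 + M * \<gamma>)) - M * \<gamma> / (R^2 + M * \<gamma>) * R^2 / M = 0"
      unfolding e1 e2 by simp
    then show ?thesis unfolding s_def M_def .
  qed
  interpret SR: sdca_run n d \<phi> x \<sigma> lam upd s 0
  proof unfold_locales
    fix \<alpha> i assume inv: "S.invar \<alpha>" and i: "i < n"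
    have stp: "step_ok \<phi> d n lam \<sigma> x R \<gamma> True \<alpha> i (upd \<alpha> i)" using st i unfolding lam_def by simp
    have "S.invar (\<alpha>(i := \<alpha> i + upd \<alpha> i)) \<and> (\<exists>u. (S.nz i \<longrightarrow> is_subgrad (\<phi> i) (dotp d (x i) (S.W \<alpha>)) (-u)) \<and>
     real n * (S.Dd (\<alpha>(i := \<alpha> i + upd \<alpha> i)) - S.Dd \<alpha>) \<ge> s * (\<phi> i (dotp d (x i) (S.W \<alpha>)) + S.psi i (\<alpha> i) + dotp d (x i) (S.W \<alpha>) * \<alpha> i)
        + (if S.nz i then s * (u - \<alpha> i)^2 / 2 * (\<gamma> * (1 - s) - s * R^2 / (lam * real n)) else 0))"
      by (rule S.step_bound[OF inv i stp]) (use xR i phi gp s0 s_def in auto)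
    then show "S.invar (\<alpha>(i := \<alpha> i + upd \<alpha> i)) \<and>
     real n * (S.Dd (\<alpha>(i := \<alpha> i + upd \<alpha> i)) - S.Dd \<alpha>) \<ge> s * (\<phi> i (dotp d (x i) (S.W \<alpha>)) + S.psi i (\<alpha> i) + dotp d (x i) (S.W \<alpha>) * \<alpha> i) - 0"
      unfolding ex0 mult_zero_right if_cancel by auto
  qed
  define K0 where "K0 = real n / s"
  have K0a: "K0 = real n + R^2 * B^2 / (\<epsilon> * \<gamma>)"
    unfolding K0_def s_def lam_def using lng lp S.npos gp ep Bp by (auto simp: field_simps)
  have K0b: "K0 > 0" unfolding K0_def using s0 S.npos by simp
  note K0 = K0a K0b
  define q where "q = 1 - s / real n"
  have q: "0 \<le> q" using s0 n1 S.npos unfolding q_def by (simp add: field_simps)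
  have "SR.Gap T \<le> K0 * (q^T * (SR.Pinf - SR.Ed 0))"
    using SR.gap_smooth[OF refl s0(1), of T] SR.geo_smooth[OF refl s0, of T] K0(2)
    unfolding K0_def q_def by (smt (verit) mult_left_mono)
  also have "\<dots> \<le> K0 * q^T"
    using SR.e0[OF s1] SR.e_nonneg[of 0] q K0(2) by (simp add: mult_left_le)
  finally have G: "SR.Gap T \<le> K0 * q^T" .
  have qe: "q^T \<le> exp (- (real T / K0))"
  proof -
    have "q \<le> exp (- (s / real n))" unfolding q_def using exp_ge_add_one_self[of "- (s / real n)"] by simp
    then have "q^T \<le> (exp (- (s / real n)))^T" using q by (intro power_mono) auto
    also have "\<dots> = exp (- (real T / K0))" unfolding K0_def using s0 S.npos
      by (simp add: exp_of_nat_mult[symmetric] field_simps)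
    finally show ?thesis .
  qed
  define SS where "SS = 2 + real n + \<epsilon> + 1/\<epsilon> + R + 1/R + B + 1/B + \<gamma> + 1/\<gamma>"
  have SS2: "SS \<ge> 2" unfolding SS_def using R0 ep Bp gp by simp
  have num: "2 * K0 / \<epsilon> \<le> SS^9"
    unfolding K0(1) by (rule num_smooth) (use R0 ep Bp gp SS2 in \<open>auto simp: SS_def\<close>)
  have lnb: "ln (2 * K0 / \<epsilon>) \<le> 10 * ln SS"
  proof -
    have "ln (2 * K0 / \<epsilon>) \<le> ln (SS^9)" using num K0(2) ep SS2 by (subst ln_le_cancel_iff) auto
    also have "\<dots> = 9 * ln SS" using SS2 by (simp add: ln_realpow)
    also have "\<dots> \<le> 10 * ln SS" using SS2 by simp
    finally show ?thesis .
  qed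
  have "10 * K0 * ln SS \<le> real T" using T unfolding SS_def[symmetric] K0(1) .
  then have "10 * ln SS \<le> real T / K0" using K0(2) by (simp add: field_simps)
  then have "exp (- (real T / K0)) \<le> exp (- ln (2 * K0 / \<epsilon>))" using lnb by simp
  also have "\<dots> = \<epsilon> / (2 * K0)" using K0(2) ep by (simp add: exp_minus ln_div exp_diff)
  finally have "K0 * q^T \<le> K0 * (\<epsilon> / (2 * K0))" using qe K0(2) by (intro mult_left_mono) auto
  then have G2: "SR.Gap T \<le> \<epsilon> / 2" using G K0(2) by simp
  have sq: "lam / 2 * S.sqn wstar \<le> \<epsilon> / 2"
  proof -
    have "S.sqn wstar = (norm2 d wstar)^2" unfolding S.sqn_def norm2_sq ..
    also have "\<dots> \<le> B^2" using wB norm2_nonneg[of d wstar] by (intro power_mono) auto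
    finally have "lam * S.sqn wstar \<le> lam * B^2" using lp by (intro mult_left_mono) auto
    then show ?thesis unfolding lam_def using Bp by simp
  qed
  have "expect n T (\<lambda>js. primal0 n d \<phi> x \<sigma> (wof n lam \<sigma> x (alphas upd js T))) - primal0 n d \<phi> x \<sigma> wstar \<le> \<epsilon>"
    using SR.expect_primal[of T wstar] G2 sq unfolding S.W_def by linarith
  then show ?thesis unfolding lam_def .
qed

lemma ln2_ge: "ln (2::real) \<ge> 1/2"
  using ln_diff_le[of 1 2] by simp

lemma lip_L0: "lipschitz_loss L f \<Longrightarrow> L \<ge> 0"
  unfolding lipschitz_loss_def by (metis abs_ge_zero abs_one diff_zero mult.right_neutral order_trans)

lemma lip_subgrad:
  assumes lip: "lipschitz_loss L f" and sg: "is_subgrad f a g"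
  shows "\<bar>g\<bar> \<le> L"
proof -
  have L0: "L \<ge> 0" by (rule lip_L0[OF lip])
  have "f a + g * ((a + sgn g) - a) \<le> f (a + sgn g)" using sg unfolding is_subgrad_def by blast
  moreover have "g * sgn g = \<bar>g\<bar>" by (simp add: abs_if sgn_if)
  ultimately have "\<bar>g\<bar> \<le> f (a + sgn g) - f a" by simp
  also have "\<dots> \<le> L * \<bar>(a + sgn g) - a\<bar>" using lip unfolding lipschitz_loss_def by (metis abs_le_D1)
  also have "\<dots> \<le> L" using L0 by (cases "g = 0") (auto simp: abs_sgn_eq)
  finally show ?thesis .
qed

lemma lip_conj:
  assumes lip: "lipschitz_loss L f" and fin: "fconj f p \<noteq> \<infinity>"
  shows "\<bar>p\<bar> \<le> L"
proof (rule ccontr)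
  assume "\<not> \<bar>p\<bar> \<le> L"
  then have pL: "\<bar>p\<bar> > L" by simp
  have L0: "L \<ge> 0" by (rule lip_L0[OF lip])
  define t where "t = max 0 ((cj f p + f 0 + 1) / (\<bar>p\<bar> - L))"
  define b where "b = sgn p * t"
  have t0: "t \<ge> 0" unfolding t_def by simp
  have pt: "(\<bar>p\<bar> - L) * t \<ge> cj f p + f 0 + 1"
  proof -
    have "(\<bar>p\<bar> - L) * ((cj f p + f 0 + 1) / (\<bar>p\<bar> - L)) = cj f p + f 0 + 1" using pL by simp
    moreover have "(\<bar>p\<bar> - L) * ((cj f p + f 0 + 1) / (\<bar>p\<bar> - L)) \<le> (\<bar>p\<bar> - L) * t"
      unfolding t_def using pL by (intro mult_left_mono) auto
    ultimately show ?thesis by simp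
  qed
  have ps: "p * sgn p = \<bar>p\<bar>" by (simp add: abs_if sgn_if)
  have pb: "p * b = \<bar>p\<bar> * t" unfolding b_def by (simp only: mult.assoc[symmetric] ps)
  have bt: "\<bar>b\<bar> \<le> t" unfolding b_def using t0 by (simp add: abs_mult abs_sgn_eq)
  have "f b - f 0 \<le> L * \<bar>b - 0\<bar>" using lip unfolding lipschitz_loss_def by (metis abs_le_D1)
  then have "f b \<le> f 0 + L * t" using bt L0 mult_left_mono[OF bt L0] by simp
  moreover have "p * b - f b \<le> cj f p" by (rule cj_ge[OF fin])
  ultimately have "(\<bar>p\<bar> - L) * t - f 0 \<le> cj f p" using pb by (simp add: algebra_simps)
  then show False using pt by simp
qed

context sdca_run begin

lemma geo_lip:
  assumes s: "s0 > 0" "s0 \<le> 1" and K: "K \<ge> 0"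
  shows "Pinf - Ed t \<le> (1 - s0 / real n)^t * (Pinf - Ed 0) + K / s0"
proof (induction t)
  case 0 then show ?case using K s by simp
next
  case (Suc t)
  have q: "0 \<le> 1 - s0 / real n" using s n1 npos by (simp add: field_simps)
  have "Pinf - Ed (Suc t) \<le> Pinf - Ed t - s0 / real n * Gap t + K / real n" using Ed_step[of t] by simp
  also have "\<dots> \<le> Pinf - Ed t - s0 / real n * (Pinf - Ed t) + K / real n"
  proof -
    have "s0 / real n * (Pinf - Ed t) \<le> s0 / real n * Gap t"
      using Gap_ge[of t] s npos by (intro mult_left_mono) auto
    then show ?thesis by simp
  qed
  also have "\<dots> = (1 - s0 / real n) * (Pinf - Ed t) + K / real n" by (simp add: algebra_simps)
  also have "\<dots> \<le> (1 - s0 / real n) * ((1 - s0 / real n)^t * (Pinf - Ed 0) + K / s0) + K / real n"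
    using Suc.IH q by (intro add_right_mono mult_left_mono) auto
  also have "\<dots> = (1 - s0 / real n)^(Suc t) * (Pinf - Ed 0) + K / s0"
    using s npos by (simp add: field_simps)
  finally show ?case .
qed

lemma sum_gap0:
  shows "s0 / real n * (\<Sum>t\<in>{T0..<T0+k}. Gap t) \<le> Ed (T0 + k) - Ed T0 + real k * K / real n"
proof (induction k)
  case 0 then show ?case by simp
next
  case (Suc k)
  have "s0 / real n * (\<Sum>t\<in>{T0..<T0+Suc k}. Gap t) = s0 / real n * (\<Sum>t\<in>{T0..<T0+k}. Gap t) + s0 / real n * Gap (T0 + k)"
    by (simp add: distrib_left)
  also have "\<dots> \<le> (Ed (T0 + k) - Ed T0 + real k * K / real n) + (Ed (Suc (T0 + k)) - Ed (T0 + k) + K / real n)"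
    using Ed_step[of "T0 + k"] Suc.IH by simp
  also have "\<dots> = Ed (T0 + Suc k) - Ed T0 + real (Suc k) * K / real n"
    by (simp add: algebra_simps add_divide_distrib)
  finally show ?case .
qed

lemma sum_gap:
  assumes "T0 \<le> T"
  shows "s0 / real n * (\<Sum>t\<in>{T0..<T}. Gap t) \<le> (Pinf - Ed T0) + real (T - T0) * K / real n"
  using sum_gap0[of T0 "T - T0"] Ed_le[of T] assms by simp

end

lemma expect_div: "expect n T (\<lambda>js. F js / c) = expect n T F / c"
  unfolding expect_def by (simp add: sum_divide_distrib[symmetric])

lemma primal_jensen:
  fixes w :: "nat \<Rightarrow> nat \<Rightarrow> real" and S :: "nat set"
  assumes fin: "finite S" "S \<noteq> {}" and cv: "\<forall>i<n. convex_on UNIV (\<phi> i)" and sg: "\<sigma> \<ge> 0"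
  shows "primal0 n d \<phi> x \<sigma> (\<lambda>j. (\<Sum>t\<in>S. w t j) / real (card S)) \<le> (\<Sum>t\<in>S. primal0 n d \<phi> x \<sigma> (w t)) / real (card S)"
proof -
  define m where "m = real (card S)"
  have m: "m > 0" unfolding m_def using fin by (simp add: card_gt_0_iff)
  have dp: "dotp d (x i) (\<lambda>j. (\<Sum>t\<in>S. w t j) / m) = (\<Sum>t\<in>S. (1/m) * dotp d (x i) (w t))" for i
    unfolding dotp_def by (simp add: sum_distrib_left sum_divide_distrib sum.swap[of _ S] algebra_simps)
  have ph: "\<phi> i (dotp d (x i) (\<lambda>j. (\<Sum>t\<in>S. w t j) / m)) \<le> (\<Sum>t\<in>S. (1/m) * \<phi> i (dotp d (x i) (w t)))"
    if i: "i < n" for i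
  proof -
    have "\<phi> i (\<Sum>t\<in>S. (1/m) *\<^sub>R dotp d (x i) (w t)) \<le> (\<Sum>t\<in>S. (1/m) * \<phi> i (dotp d (x i) (w t)))"
      using fin cv i m by (intro convex_on_sum) (auto simp: m_def)
    then show ?thesis unfolding dp by simp
  qed
  have nm: "norm1 d (\<lambda>j. (\<Sum>t\<in>S. w t j) / m) \<le> (\<Sum>t\<in>S. norm1 d (w t)) / m"
  proof -
    have "norm1 d (\<lambda>j. (\<Sum>t\<in>S. w t j) / m) = (\<Sum>j<d. \<bar>\<Sum>t\<in>S. w t j\<bar> / m)"
      unfolding norm1_def using m by simp
    also have "\<dots> \<le> (\<Sum>j<d. (\<Sum>t\<in>S. \<bar>w t j\<bar>) / m)"
      using m by (intro sum_mono divide_right_mono sum_abs) auto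
    also have "\<dots> = (\<Sum>t\<in>S. norm1 d (w t)) / m"
      unfolding norm1_def by (simp add: sum_divide_distrib[symmetric] sum.swap[of _ S])
    finally show ?thesis .
  qed
  have "primal0 n d \<phi> x \<sigma> (\<lambda>j. (\<Sum>t\<in>S. w t j) / m)
     \<le> (\<Sum>i<n. \<Sum>t\<in>S. (1/m) * \<phi> i (dotp d (x i) (w t))) / real n + \<sigma> * ((\<Sum>t\<in>S. norm1 d (w t)) / m)"
    unfolding primal0_def
    by (intro add_mono divide_right_mono sum_mono ph mult_left_mono nm sg) auto
  also have "\<dots> = (\<Sum>t\<in>S. primal0 n d \<phi> x \<sigma> (w t)) / m"
    unfolding primal0_def using m
    by (simp add: sum.distrib sum_divide_distrib[symmetric] sum_distrib_left[symmetric] sum.swap[of _ S] field_simps)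
  finally show ?thesis unfolding m_def .
qed

lemma lip_main:
  fixes n d :: nat and \<phi> :: "nat \<Rightarrow> real \<Rightarrow> real" and x :: "nat \<Rightarrow> nat \<Rightarrow> real"
    and \<sigma> \<epsilon> B R L :: real and wstar :: "nat \<Rightarrow> real" and upd :: "(nat \<Rightarrow> real) \<Rightarrow> nat \<Rightarrow> real" and T :: nat
  assumes n1: "n \<ge> 1" and sp: "\<sigma> > 0" and ep: "\<epsilon> > 0"
    and phi: "\<forall>i<n. convex_on UNIV (\<phi> i) \<and> (\<forall>a. \<phi> i a \<ge> 0) \<and> lipschitz_loss L (\<phi> i)"
    and s1: "(\<Sum>i<n. \<phi> i 0) / real n \<le> 1" and Bp: "B > 0" and wB: "norm2 d wstar \<le> B"
    and xR: "\<forall>i<n. norm2 d (x i) \<le> R"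
    and st: "\<forall>\<alpha> i. i < n \<longrightarrow> step_ok \<phi> d n (\<epsilon> / B^2) \<sigma> x R 0 False \<alpha> i (upd \<alpha> i)"
    and T: "real T \<ge> 100 * (real n + L^2 * R^2 * B^2 / \<epsilon>^2)
                 * ln (2 + real n + \<epsilon> + 1/\<epsilon> + R + 1/R + B + 1/B + L + 1/L)"
  shows "expect n T (\<lambda>is. primal0 n d \<phi> x \<sigma> (wavg n (\<epsilon> / B^2) \<sigma> x upd is (T div 2) T))
            - primal0 n d \<phi> x \<sigma> wstar \<le> \<epsilon>"
proof -
  define lam where "lam = \<epsilon> / B^2"
  have lp: "lam > 0" unfolding lam_def using ep Bp by simp
  interpret S: sdca n d \<phi> x \<sigma> lam
    by unfold_locales (use n1 sp lp phi in auto)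
  have R0: "R \<ge> 0" using xR n1 norm2_nonneg[of d "x 0"] by (meson dual_order.trans less_le_trans zero_less_one)
  have L0: "L \<ge> 0" using phi n1 lip_L0 by auto
  define Gc where "Gc = 4 * L^2 * R^2"
  have G0: "Gc \<ge> 0" unfolding Gc_def by simp
  have lne: "lam * real n * \<epsilon> > 0" using lp S.npos ep by simp
  define s where "s = lam * real n * \<epsilon> / (lam * real n * \<epsilon> + 2 * Gc)"
  have den: "lam * real n * \<epsilon> + 2 * Gc > 0" using lne G0 by simp
  have s0: "s > 0" "s \<le> 1" unfolding s_def using lne den G0 by (auto simp: divide_pos_pos divide_le_eq_1)
  define K where "K = s^2 * Gc / (2 * lam * real n)"
  have K0: "K \<ge> 0" unfolding K_def using G0 lp S.npos by simp
  interpret SR: sdca_run n d \<phi> x \<sigma> lam upd s K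
  proof unfold_locales
    fix \<alpha> i assume inv: "S.invar \<alpha>" and i: "i < n"
    have stp: "step_ok \<phi> d n lam \<sigma> x R 0 False \<alpha> i (upd \<alpha> i)" using st i unfolding lam_def by simp
    have "S.invar (\<alpha>(i := \<alpha> i + upd \<alpha> i)) \<and> (\<exists>u. (S.nz i \<longrightarrow> is_subgrad (\<phi> i) (dotp d (x i) (S.W \<alpha>)) (-u)) \<and>
     real n * (S.Dd (\<alpha>(i := \<alpha> i + upd \<alpha> i)) - S.Dd \<alpha>) \<ge> s * (\<phi> i (dotp d (x i) (S.W \<alpha>)) + S.psi i (\<alpha> i) + dotp d (x i) (S.W \<alpha>) * \<alpha> i)
        + (if S.nz i then s * (u - \<alpha> i)^2 / 2 * (0 * (1 - s) - s * R^2 / (lam * real n)) else 0))"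
      by (rule S.step_bound[OF inv i stp]) (use xR i s0 in auto)
    then obtain u where inv': "S.invar (\<alpha>(i := \<alpha> i + upd \<alpha> i))"
      and sg: "S.nz i \<longrightarrow> is_subgrad (\<phi> i) (dotp d (x i) (S.W \<alpha>)) (-u)"
      and b: "real n * (S.Dd (\<alpha>(i := \<alpha> i + upd \<alpha> i)) - S.Dd \<alpha>) \<ge> s * (\<phi> i (dotp d (x i) (S.W \<alpha>)) + S.psi i (\<alpha> i) + dotp d (x i) (S.W \<alpha>) * \<alpha> i)
        + (if S.nz i then s * (u - \<alpha> i)^2 / 2 * (0 * (1 - s) - s * R^2 / (lam * real n)) else 0)"
      by blast
    have ex: "(if S.nz i then s * (u - \<alpha> i)^2 / 2 * (0 * (1 - s) - s * R^2 / (lam * real n)) else 0) \<ge> - K"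
    proof (cases "S.nz i")
      case False then show ?thesis using K0 by simp
    next
      case True
      have lip: "lipschitz_loss L (\<phi> i)" using phi i by auto
      have u: "\<bar>u\<bar> \<le> L" using lip_subgrad[OF lip] sg True by fastforce
      have a: "\<bar>\<alpha> i\<bar> \<le> L" using lip_conj[OF lip] inv i True unfolding S.invar_def by fastforce
      have "\<bar>u - \<alpha> i\<bar> \<le> 2 * L" using u a by linarith
      then have z: "(u - \<alpha> i)^2 \<le> 4 * L^2"
        using power_mono[of "\<bar>u - \<alpha> i\<bar>" "2*L" 2] by (simp add: power_mult_distrib)
      have "s * (u - \<alpha> i)^2 / 2 * (0 * (1 - s) - s * R^2 / (lam * real n)) = - (s^2 * R^2 / (2 * lam * real n)) * (u - \<alpha> i)^2"
        by (simp add: power2_eq_square field_simps)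
      also have "\<dots> \<ge> - (s^2 * R^2 / (2 * lam * real n)) * (4 * L^2)"
        using z lp S.npos by (intro mult_left_mono_neg) auto
      also have "- (s^2 * R^2 / (2 * lam * real n)) * (4 * L^2) = - K"
        unfolding K_def Gc_def by (simp add: field_simps)
      finally show ?thesis using True by simp
    qed
    show "S.invar (\<alpha>(i := \<alpha> i + upd \<alpha> i)) \<and>
     real n * (S.Dd (\<alpha>(i := \<alpha> i + upd \<alpha> i)) - S.Dd \<alpha>) \<ge> s * (\<phi> i (dotp d (x i) (S.W \<alpha>)) + S.psi i (\<alpha> i) + dotp d (x i) (S.W \<alpha>) * \<alpha> i) - K"
      using inv' b ex by linarith
  qed
  define K1 where "K1 = real n / s"
  have K1b: "K1 > 0" unfolding K1_def using s0 S.npos by simp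
  have K1a: "K1 = real n + 8 * L^2 * R^2 * B^2 / \<epsilon>^2"
  proof -
    have "K1 = real n * (lam * real n * \<epsilon> + 2 * Gc) / (lam * real n * \<epsilon>)"
      unfolding K1_def s_def using lne den by simp
    also have "\<dots> = real n + 2 * Gc / (lam * \<epsilon>)" using lne S.npos lp ep by (simp add: field_simps)
    also have "\<dots> = real n + 8 * L^2 * R^2 * B^2 / \<epsilon>^2" unfolding Gc_def lam_def using ep Bp
      by (simp add: power2_eq_square field_simps)
    finally show ?thesis .
  qed
  have Ks: "K / s \<le> \<epsilon> / 4"
  proof -
    have "K / s = s * Gc / (2 * lam * real n)" unfolding K_def using s0 by (simp add: power2_eq_square)
    moreover have "s * Gc \<le> lam * real n * \<epsilon> / 2"
    proof -
      have "s * Gc = lam * real n * \<epsilon> * Gc / (lam * real n * \<epsilon> + 2 * Gc)" unfolding s_def by simp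
      also have "\<dots> \<le> lam * real n * \<epsilon> / 2"
      proof -
        have "0 \<le> (lam * real n * \<epsilon>) * (lam * real n * \<epsilon>) / 2" using lne by simp
        then have "lam * real n * \<epsilon> * Gc \<le> lam * real n * \<epsilon> / 2 * (lam * real n * \<epsilon> + 2 * Gc)"
          by (simp add: algebra_simps)
        then show ?thesis using den by (simp add: pos_divide_le_eq)
      qed
      finally show ?thesis .
    qed
    moreover have "s * Gc / (2 * lam * real n) \<le> (lam * real n * \<epsilon> / 2) / (2 * lam * real n)"
      using lp S.npos calculation(2) by (intro divide_right_mono) auto
    ultimately have "K / s \<le> (lam * real n * \<epsilon> / 2) / (2 * lam * real n)" by simp
    also have "\<dots> = \<epsilon> / 4" using lp S.npos by (simp add: field_simps)
    finally show ?thesis .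
  qed
  define T0 where "T0 = T div 2"
  define m where "m = T - T0"
  have T0T: "T0 \<le> T" unfolding T0_def by simp
  have h1: "T \<le> 2 * T0 + 1" "2 * T0 \<le> T" unfolding T0_def by presburger+
  have h2: "real T \<le> real (2 * T0 + 1)" "real (2 * T0) \<le> real T" using of_nat_mono[OF h1(1)] of_nat_mono[OF h1(2)] by auto
  have rT0: "real T0 \<ge> (real T - 1) / 2" using h2 by simp
  have rm: "real m \<ge> real T / 2" unfolding m_def using h2 T0T by (simp add: of_nat_diff)
  define SS where "SS = 2 + real n + \<epsilon> + 1/\<epsilon> + R + 1/R + B + 1/B + L + 1/L"
  have SS2: "SS \<ge> 2" unfolding SS_def using R0 ep Bp L0 by simp
  have lnS: "ln SS \<ge> 1/2" using ln2_ge SS2 by (smt (verit) ln_le_cancel_iff)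
  define K2 where "K2 = real n + L^2 * R^2 * B^2 / \<epsilon>^2"
  have K2a: "K2 \<ge> 1"
  proof -
    have "L^2 * R^2 * B^2 / \<epsilon>^2 \<ge> 0" by simp
    moreover have "real n \<ge> 1" using n1 by simp
    ultimately show ?thesis unfolding K2_def by linarith
  qed
  have K12: "K1 \<le> 8 * K2" unfolding K1a K2_def using S.npos by (simp add: field_simps)
  define X where "X = K2 * ln SS"
  have X1: "X \<ge> K2 / 2"
  proof -
    have "K2 * (1/2) \<le> K2 * ln SS" using lnS K2a by (intro mult_left_mono) auto
    then show ?thesis unfolding X_def by simp
  qed
  have TX: "real T \<ge> 100 * X" using T unfolding X_def K2_def SS_def by (simp only: mult.assoc)
  have m2: "real m \<ge> 2 * K1" using rm TX X1 K12 by linarith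
  have ln4: "ln (4 / \<epsilon>) \<le> 3 * ln SS"
  proof -
    have "4 \<le> SS^2" using SS2 power_mono[of 2 SS 2] by simp
    moreover have "1/\<epsilon> \<le> SS" unfolding SS_def using R0 ep Bp L0 by simp
    ultimately have "4 * (1/\<epsilon>) \<le> SS^2 * SS" using ep by (intro mult_mono) auto
    moreover have "SS^2 * SS = SS^3" by (simp add: power_Suc2[symmetric] del: power_Suc2)
    ultimately have "4 / \<epsilon> \<le> SS^3" by simp
    then have "ln (4 / \<epsilon>) \<le> ln (SS^3)" using ep SS2 by (subst ln_le_cancel_iff) auto
    also have "\<dots> = 3 * ln SS" using SS2 by (simp add: ln_realpow)
    finally show ?thesis .
  qed
  have "3 * ln SS * K1 \<le> 3 * ln SS * (8 * K2)" using K12 lnS by (intro mult_left_mono) auto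
  moreover have "3 * ln SS * (8 * K2) = 24 * X" unfolding X_def by simp
  ultimately have a1: "3 * ln SS * K1 \<le> 24 * X" by linarith
  have a2: "24 * X \<le> real T0" using rT0 TX X1 K2a by (simp add: field_simps)
  from a1 a2 have "3 * ln SS * K1 \<le> real T0" by linarith
  moreover have "K1 * ln (4 / \<epsilon>) \<le> K1 * (3 * ln SS)" using ln4 K1b by (intro mult_left_mono) auto
  ultimately have "K1 * ln (4 / \<epsilon>) \<le> real T0" by (simp add: algebra_simps)
  then have "ln (4 / \<epsilon>) \<le> real T0 / K1" using K1b by (simp add: pos_le_divide_eq mult.commute)
  then have ex1: "exp (- (real T0 / K1)) \<le> \<epsilon> / 4"
    using ep by (smt (verit) exp_ln exp_le_cancel_iff exp_minus divide_pos_pos inverse_divide zero_less_numeral)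
  define q where "q = 1 - s / real n"
  have q: "0 \<le> q" using s0 n1 S.npos unfolding q_def by (simp add: field_simps)
  have qT0: "q^T0 \<le> \<epsilon> / 4"
  proof -
    have "q \<le> exp (- (s / real n))" unfolding q_def using exp_ge_add_one_self[of "- (s / real n)"] by simp
    then have "q^T0 \<le> (exp (- (s / real n)))^T0" using q by (intro power_mono) auto
    also have "\<dots> = exp (- (real T0 / K1))" unfolding K1_def using s0 S.npos
      by (simp add: exp_of_nat_mult[symmetric] field_simps)
    finally show ?thesis using ex1 by simp
  qed
  have eT0: "SR.Pinf - SR.Ed T0 \<le> \<epsilon> / 2"
  proof -
    have a: "SR.Pinf - SR.Ed T0 \<le> q^T0 * (SR.Pinf - SR.Ed 0) + K / s"
      using SR.geo_lip[OF s0 K0, of T0] unfolding q_def .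
    have b: "q^T0 * (SR.Pinf - SR.Ed 0) \<le> q^T0"
      using SR.e0[OF s1] SR.e_nonneg[of 0] q by (simp add: mult_left_le)
    from a b have "SR.Pinf - SR.Ed T0 \<le> q^T0 + K / s" by linarith
    then show ?thesis using qT0 Ks by linarith
  qed
  have mpos: "real m > 0" using m2 K1b by simp
  have sumG: "(\<Sum>t\<in>{T0..<T}. SR.Gap t) / real m \<le> \<epsilon> / 2"
  proof -
    have "s / real n * (\<Sum>t\<in>{T0..<T}. SR.Gap t) \<le> (SR.Pinf - SR.Ed T0) + real m * K / real n"
      using SR.sum_gap[OF T0T] unfolding m_def .
    then have "K1 * (s / real n * (\<Sum>t\<in>{T0..<T}. SR.Gap t)) \<le> K1 * ((SR.Pinf - SR.Ed T0) + real m * K / real n)"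
      using K1b by (intro mult_left_mono) auto
    moreover have "K1 * (s / real n * (\<Sum>t\<in>{T0..<T}. SR.Gap t)) = (\<Sum>t\<in>{T0..<T}. SR.Gap t)"
      unfolding K1_def using s0 S.npos by simp
    ultimately have "(\<Sum>t\<in>{T0..<T}. SR.Gap t) \<le> K1 * ((SR.Pinf - SR.Ed T0) + real m * K / real n)" by simp
    also have "\<dots> = K1 * (SR.Pinf - SR.Ed T0) + real m * (K / s)"
      unfolding K1_def using s0 S.npos by (simp add: field_simps)
    also have "\<dots> \<le> K1 * (\<epsilon> / 2) + real m * (\<epsilon> / 4)"
      using eT0 Ks K1b mpos by (intro add_mono mult_left_mono) auto
    also have "\<dots> \<le> real m * (\<epsilon> / 2)" using m2 ep by (simp add: field_simps)
    finally show ?thesis using mpos by (simp add: field_simps)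
  qed
  have cardm: "card {T0..<T} = m" unfolding m_def by simp
  have ne: "{T0..<T} \<noteq> {}" using mpos cardm by auto
  define c where "c = primal0 n d \<phi> x \<sigma> wstar + lam / 2 * S.sqn wstar"
  have "expect n T (\<lambda>js. primal0 n d \<phi> x \<sigma> (wavg n lam \<sigma> x upd js T0 T))
      \<le> expect n T (\<lambda>js. (\<Sum>t\<in>{T0..<T}. primal0 n d \<phi> x \<sigma> (S.W (alphas upd js t))) / real m)"
  proof (rule expect_mono)
    fix js
    have W: "wavg n lam \<sigma> x upd js T0 T = (\<lambda>j. (\<Sum>t\<in>{T0..<T}. S.W (alphas upd js t) j) / real m)"
      unfolding wavg_def S.W_def m_def ..
    have J: "primal0 n d \<phi> x \<sigma> (\<lambda>j. (\<Sum>t\<in>{T0..<T}. S.W (alphas upd js t) j) / real (card {T0..<T}))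
       \<le> (\<Sum>t\<in>{T0..<T}. primal0 n d \<phi> x \<sigma> (S.W (alphas upd js t))) / real (card {T0..<T})"
      by (rule primal_jensen) (use ne phi sp in auto)
    show "primal0 n d \<phi> x \<sigma> (wavg n lam \<sigma> x upd js T0 T) \<le> (\<Sum>t\<in>{T0..<T}. primal0 n d \<phi> x \<sigma> (S.W (alphas upd js t))) / real m"
      unfolding W using J unfolding cardm .
  qed
  also have "\<dots> = (\<Sum>t\<in>{T0..<T}. expect n T (\<lambda>js. primal0 n d \<phi> x \<sigma> (S.W (alphas upd js t)))) / real m"
    unfolding expect_div expect_sum[OF finite_atLeastLessThan] ..
  also have "\<dots> = (\<Sum>t\<in>{T0..<T}. expect n t (\<lambda>js. primal0 n d \<phi> x \<sigma> (S.W (alphas upd js t)))) / real m"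
  proof -
    have "expect n T (\<lambda>js. primal0 n d \<phi> x \<sigma> (S.W (alphas upd js t))) = expect n t (\<lambda>js. primal0 n d \<phi> x \<sigma> (S.W (alphas upd js t)))"
      if "t \<in> {T0..<T}" for t
    proof (rule expect_indep[OF n1])
      fix js js' :: "nat \<Rightarrow> nat" assume "\<forall>k<t. js k = js' k"
      then have "alphas upd js t = alphas upd js' t" by (rule alphas_dep)
      then show "primal0 n d \<phi> x \<sigma> (S.W (alphas upd js t)) = primal0 n d \<phi> x \<sigma> (S.W (alphas upd js' t))" by simp
    qed (use that in auto)
    then show ?thesis by simp
  qed
  also have "\<dots> \<le> (\<Sum>t\<in>{T0..<T}. SR.Gap t + c) / real m"
    unfolding c_def using mpos by (intro divide_right_mono sum_mono) (use SR.expect_primal in \<open>auto simp: add.assoc\<close>)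
  also have "\<dots> = (\<Sum>t\<in>{T0..<T}. SR.Gap t) / real m + c"
    using mpos cardm by (simp add: sum.distrib add_divide_distrib)
  finally have E: "expect n T (\<lambda>js. primal0 n d \<phi> x \<sigma> (wavg n lam \<sigma> x upd js T0 T)) \<le> (\<Sum>t\<in>{T0..<T}. SR.Gap t) / real m + c" .
  have sq: "lam / 2 * S.sqn wstar \<le> \<epsilon> / 2"
  proof -
    have "S.sqn wstar = (norm2 d wstar)^2" unfolding S.sqn_def norm2_sq ..
    also have "\<dots> \<le> B^2" using wB norm2_nonneg[of d wstar] by (intro power_mono) auto
    finally have "lam * S.sqn wstar \<le> lam * B^2" using lp by (intro mult_left_mono) auto
    then show ?thesis unfolding lam_def using Bp by simp
  qed
  have "expect n T (\<lambda>js. primal0 n d \<phi> x \<sigma> (wavg n lam \<sigma> x upd js T0 T)) - primal0 n d \<phi> x \<sigma> wstar \<le> \<epsilon>"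
    using E sumG sq unfolding c_def by linarith
  then show ?thesis unfolding lam_def T0_def .

qed

theorem corollary1:
  shows
  "(\<exists>C>0. \<forall>(n::nat) (d::nat) (\<phi>::nat \<Rightarrow> real \<Rightarrow> real) (x::nat \<Rightarrow> nat \<Rightarrow> real)
        (\<sigma>::real) (\<epsilon>::real) (B::real) (R::real) (\<gamma>::real) (wstar::nat \<Rightarrow> real)
        (upd::(nat \<Rightarrow> real) \<Rightarrow> nat \<Rightarrow> real) (T::nat).
      n \<ge> 1 \<and> \<sigma> > 0 \<and> \<epsilon> > 0 \<and> \<gamma> > 0 \<and>
      (\<forall>i<n. convex_on UNIV (\<phi> i) \<and> (\<forall>a. \<phi> i a \<ge> 0) \<and> smooth_loss \<gamma> (\<phi> i)) \<and>
      (\<Sum>i<n. \<phi> i 0) / real n \<le> 1 \<and>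
      (\<forall>w. primal0 n d \<phi> x \<sigma> wstar \<le> primal0 n d \<phi> x \<sigma> w) \<and>
      B > 0 \<and> norm2 d wstar \<le> B \<and> (\<forall>i<n. norm2 d (x i) \<le> R) \<and>
      (\<forall>\<alpha> i. i < n \<longrightarrow> step_ok \<phi> d n (\<epsilon> / B^2) \<sigma> x R \<gamma> True \<alpha> i (upd \<alpha> i)) \<and>
      real T \<ge> C * (real n + R^2 * B^2 / (\<epsilon> * \<gamma>))
                 * ln (2 + real n + \<epsilon> + 1/\<epsilon> + R + 1/R + B + 1/B + \<gamma> + 1/\<gamma>)
      \<longrightarrow> expect n T (\<lambda>is. primal0 n d \<phi> x \<sigma> (wof n (\<epsilon> / B^2) \<sigma> x (alphas upd is T)))
            - primal0 n d \<phi> x \<sigma> wstar \<le> \<epsilon>)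
 \<and> (\<exists>C>0. \<forall>(n::nat) (d::nat) (\<phi>::nat \<Rightarrow> real \<Rightarrow> real) (x::nat \<Rightarrow> nat \<Rightarrow> real)
        (\<sigma>::real) (\<epsilon>::real) (B::real) (R::real) (L::real) (wstar::nat \<Rightarrow> real)
        (upd::(nat \<Rightarrow> real) \<Rightarrow> nat \<Rightarrow> real) (T::nat).
      n \<ge> 1 \<and> \<sigma> > 0 \<and> \<epsilon> > 0 \<and>
      (\<forall>i<n. convex_on UNIV (\<phi> i) \<and> (\<forall>a. \<phi> i a \<ge> 0) \<and> lipschitz_loss L (\<phi> i)) \<and>
      (\<Sum>i<n. \<phi> i 0) / real n \<le> 1 \<and>
      (\<forall>w. primal0 n d \<phi> x \<sigma> wstar \<le> primal0 n d \<phi> x \<sigma> w) \<and>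
      B > 0 \<and> norm2 d wstar \<le> B \<and> (\<forall>i<n. norm2 d (x i) \<le> R) \<and>
      (\<forall>\<alpha> i. i < n \<longrightarrow> step_ok \<phi> d n (\<epsilon> / B^2) \<sigma> x R 0 False \<alpha> i (upd \<alpha> i)) \<and>
      real T \<ge> C * (real n + L^2 * R^2 * B^2 / \<epsilon>^2)
                 * ln (2 + real n + \<epsilon> + 1/\<epsilon> + R + 1/R + B + 1/B + L + 1/L)
      \<longrightarrow> expect n T (\<lambda>is. primal0 n d \<phi> x \<sigma> (wavg n (\<epsilon> / B^2) \<sigma> x upd is (T div 2) T))
            - primal0 n d \<phi> x \<sigma> wstar \<le> \<epsilon>)"
proof (rule conjI)
  show "\<exists>C>0. \<forall>(n::nat) (d::nat) (\<phi>::nat \<Rightarrow> real \<Rightarrow> real) (x::nat \<Rightarrow> nat \<Rightarrow> real)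
        (\<sigma>::real) (\<epsilon>::real) (B::real) (R::real) (\<gamma>::real) (wstar::nat \<Rightarrow> real)
        (upd::(nat \<Rightarrow> real) \<Rightarrow> nat \<Rightarrow> real) (T::nat).
      n \<ge> 1 \<and> \<sigma> > 0 \<and> \<epsilon> > 0 \<and> \<gamma> > 0 \<and>
      (\<forall>i<n. convex_on UNIV (\<phi> i) \<and> (\<forall>a. \<phi> i a \<ge> 0) \<and> smooth_loss \<gamma> (\<phi> i)) \<and>
      (\<Sum>i<n. \<phi> i 0) / real n \<le> 1 \<and>
      (\<forall>w. primal0 n d \<phi> x \<sigma> wstar \<le> primal0 n d \<phi> x \<sigma> w) \<and>
      B > 0 \<and> norm2 d wstar \<le> B \<and> (\<forall>i<n. norm2 d (x i) \<le> R) \<and>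
      (\<forall>\<alpha> i. i < n \<longrightarrow> step_ok \<phi> d n (\<epsilon> / B^2) \<sigma> x R \<gamma> True \<alpha> i (upd \<alpha> i)) \<and>
      real T \<ge> C * (real n + R^2 * B^2 / (\<epsilon> * \<gamma>))
                 * ln (2 + real n + \<epsilon> + 1/\<epsilon> + R + 1/R + B + 1/B + \<gamma> + 1/\<gamma>)
      \<longrightarrow> expect n T (\<lambda>is. primal0 n d \<phi> x \<sigma> (wof n (\<epsilon> / B^2) \<sigma> x (alphas upd is T)))
            - primal0 n d \<phi> x \<sigma> wstar \<le> \<epsilon>"
    apply (rule exI[where x = 10])
    apply (intro conjI allI impI)
     apply simp
    subgoal for n d \<phi> x \<sigma> \<epsilon> B R \<gamma> wstar upd T
      by (elim conjE) (rule smooth_main[where \<gamma>=\<gamma> and R=R], assumption+)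
    done
next
  show "\<exists>C>0. \<forall>(n::nat) (d::nat) (\<phi>::nat \<Rightarrow> real \<Rightarrow> real) (x::nat \<Rightarrow> nat \<Rightarrow> real)
        (\<sigma>::real) (\<epsilon>::real) (B::real) (R::real) (L::real) (wstar::nat \<Rightarrow> real)
        (upd::(nat \<Rightarrow> real) \<Rightarrow> nat \<Rightarrow> real) (T::nat).
      n \<ge> 1 \<and> \<sigma> > 0 \<and> \<epsilon> > 0 \<and>
      (\<forall>i<n. convex_on UNIV (\<phi> i) \<and> (\<forall>a. \<phi> i a \<ge> 0) \<and> lipschitz_loss L (\<phi> i)) \<and>
      (\<Sum>i<n. \<phi> i 0) / real n \<le> 1 \<and>
      (\<forall>w. primal0 n d \<phi> x \<sigma> wstar \<le> primal0 n d \<phi> x \<sigma> w) \<and>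
      B > 0 \<and> norm2 d wstar \<le> B \<and> (\<forall>i<n. norm2 d (x i) \<le> R) \<and>
      (\<forall>\<alpha> i. i < n \<longrightarrow> step_ok \<phi> d n (\<epsilon> / B^2) \<sigma> x R 0 False \<alpha> i (upd \<alpha> i)) \<and>
      real T \<ge> C * (real n + L^2 * R^2 * B^2 / \<epsilon>^2)
                 * ln (2 + real n + \<epsilon> + 1/\<epsilon> + R + 1/R + B + 1/B + L + 1/L)
      \<longrightarrow> expect n T (\<lambda>is. primal0 n d \<phi> x \<sigma> (wavg n (\<epsilon> / B^2) \<sigma> x upd is (T div 2) T))
            - primal0 n d \<phi> x \<sigma> wstar \<le> \<epsilon>"
    apply (rule exI[where x = 100])
    apply (intro conjI allI impI)
     apply simp
    subgoal for n d \<phi> x \<sigma> \<epsilon> B R L wstar upd T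
      by (elim conjE) (rule lip_main[where L=L and R=R], assumption+)
    done
qed

end
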